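(* Consider the ROSS algorithm described in the context and suppose Assumptions (A1), (A2), (A3) hold. Then in each round $t\ge1$, $$\mathbb{E}\left[\left\|\frac1N\sum_{i=1}^N\left(\bar g^{[t]}_i-g^{[t]}_{i,i}\right)\right\|^2\right]\le\frac{2\sigma^2}{\omega_{min}^4}+\frac{2\sigma^2}{N}+\frac{8\varsigma^2}{\omega_{min}^4}+\frac{16L^2}{N\omega_{min}^4}\sum_{i=1}^N\mathbb{E}\left[\left\|x^{[t-1]}_i-\bar x^{[t-1]}\right\|^2\right]+\left(\frac{8}{\omega_{min}^4}+2\right)\mathbb{E}\left[\left\|\frac1N\sum_{i=1}^N\nabla f_i\left(x^{[t-1]}_i\right)\right\|^2\right].$$
   Context: Setting: $N\ge1$ agents $\mathcal{N}=\{1,\dots,N\}$. $\mathbf{W}=(\omega_{i,j})\in[0,1]^{N\times N}$ is a symmetric doubly stochastic matrix ($\omega_{i,j}=\omega_{j,i}$, $\sum_{j}\omega_{i,j}=1$). $\mathcal{N}_i=\{j\in\mathcal{N}:\omega_{i,j}>0\}$ is the neighborhood of agent $i$ (the algorithm treats $i$ itself as a member of $\mathcal{N}_i$), and $\omega_{min}=\min_{i\in\mathcal{N},j\in\mathcal{N}_i}\omega_{i,j}$. Agent $i$ has a data distribution $\mathcal{D}_i$; $F(x;\xi)$ is a real-valued loss, differentiable in $x\in\mathbb{R}^d$; $f_i(x)=\mathbb{E}_{\xi\sim\mathcal{D}_i}[F(x;\xi)]$ and $\mathcal{F}(x)=\frac1N\sum_{i=1}^N f_i(x)$. A finite validation set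 $\mathcal{Q}$ is available to every agent, and $J(\xi;x)$ denotes the accuracy of model $x$ on sample $\xi$. Algorithm ROSS (learning rate $\gamma>0$, momentum coefficient $\alpha$): all agents start from a common point $x_i^{[0]}=x^{[0]}$ with $u_i^{[0]}=0$. In each round $t=1,2,\dots$, each agent $i$ draws a sample $\xi_{i,t}\sim\mathcal{D}_i$ (independently across agents and rounds) and for each $j\in\mathcal{N}_i$ computes $g^{[t]}_{i,j}=\nabla F(x^{[t-1]}_j;\xi_{i,t})$ (so $g^{[t]}_{i,i}$ is its local stochastic gradient). Agent $i$ then sets $x^{[t]}_{i,j}=x^{[t-1]}_i-\gamma g^{[t]}_{j,i}$ for $j\in\mathcal{N}_i$; for $\mathcal{N}'\subseteq\mathcal{N}_i$ it defines $v(\mathcal{N}')=\frac{1}{|\mathcal{Q}|}\sum_{\xi\in\mathcal{Q}}J\big(\xi;\frac{1}{|\mathcal{N}'|}\sum_{j\in\mathcal{N}'}x^{[t]}_{i,j}\big)$ ($v(\emptyset)=0$); Shapley values $\varphi^{[t]}_{i,j}=\sum_{\mathcal{N}'\subseteq\mathcal{N}_i\setminus\{j\}}\frac{v(\mathcal{N}'\cup\{j\})-v(\mathcal{N}')}{|\mathcal{N}_i|\binom{|\mathcal{N}_i|-1}{|\mathcal{N}'|}}$; normalized values $\hat\varphi^{[t]}_{i,j}=\frac{\varphi^{[t]}_{i,j}-\min_{k\in\mathcal{N}_i}\varphi^{[t]}_{i,k}}{\max_{k\in\mathcal{N}_i}\varphi^{[t]}_{i,k}-\min_{k\in\mathcal{N}_i}\varphi^{[t]}_{i,k}}$;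 weights $\pi^{[t]}_{i,j}=\frac{\hat\varphi^{[t]}_{i,j}}{\omega_{i,j}\sum_{k\in\mathcal{N}_i}\hat\varphi^{[t]}_{i,k}}$; then $\bar g^{[t]}_i=\sum_{j\in\mathcal{N}_i}\pi^{[t]}_{i,j}g^{[t]}_{j,i}$, $\hat u^{[t]}_i=\alpha u^{[t-1]}_i+\bar g^{[t]}_i$, $\hat x^{[t]}_i=x^{[t-1]}_i-\gamma\hat u^{[t]}_i$, $u^{[t]}_i=\sum_{j\in\mathcal{N}_i}\omega_{i,j}\hat u^{[t]}_j$, $x^{[t]}_i=\sum_{j\in\mathcal{N}_i}\omega_{i,j}\hat x^{[t]}_j$. Write $\bar x^{[t]}=\frac1N\sum_{i=1}^N x^{[t]}_i$. Expectations are over the random samples. Assumptions: (A1) each $f_i$ is $L$-smooth. (A2) there exist $\sigma>0,\varsigma>0$ with $\mathbb{E}_{\xi\sim\mathcal{D}_i}\|\nabla F(x;\xi)-\nabla f_i(x)\|^2\le\sigma^2$ and $\|\nabla f_i(x)-\nabla\mathcal{F}(x)\|^2\le\varsigma^2$ for all $x$ and all $i$. (A3) with $\lambda_k(\mathbf{W})$ the $k$-th largest eigenvalue of $\mathbf{W}$, $\lambda_1(\mathbf{W})=1$ and $\max\{|\lambda_2(\mathbf{W})|,|\lambda_N(\mathbf{W})|\}\le\sqrt{\rho}$ for some constant $\rho<1$. *)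

theory Defs
  imports "HOL-Probability.Probability" "HOL-Computational_Algebra.Polynomial"
begin

definition nbhd :: "real^'n^'n \<Rightarrow> 'n \<Rightarrow> 'n set" where
  "nbhd W i = {j. 0 < W $ i $ j} \<union> {i}"

definition omega_min :: "real^'n^'n \<Rightarrow> real" where
  "omega_min W = Min {W $ i $ j | i j. 0 < W $ i $ j}"

definition doubly_stochastic_sym :: "real^('n::finite)^'n \<Rightarrow> bool" where
  "doubly_stochastic_sym W \<longleftrightarrow>
     (\<forall>i j. 0 \<le> W $ i $ j \<and> W $ i $ j \<le> 1) \<and>
     (\<forall>i j. W $ i $ j = W $ j $ i) \<and>
     (\<forall>i. (\<Sum>j\<in>UNIV. W $ i $ j) = 1)"

text \<open>Characteristic polynomial det(X I - W) and the eigenvalues, counted with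
  multiplicity, in non-increasing order; eig_k W k is the k-th largest (k >= 1).\<close>
definition char_poly_mat :: "real^('n::finite)^'n \<Rightarrow> real poly" where
  "char_poly_mat W = det (\<chi> i j. if i = j then [:- (W $ i $ j), 1:] else [:- (W $ i $ j):])"

definition eig_k :: "real^('n::finite)^'n \<Rightarrow> nat \<Rightarrow> real" where
  "eig_k W k = rev (sorted_list_of_multiset (proots (char_poly_mat W))) ! (k - 1)"

text \<open>State of the agents: (x, u).  xi a is the sample drawn by agent a in the current round.
  sg gradF x xi a b = g_{a,b} = nabla F(x_b ; xi_a).\<close>
definition sg :: "('v \<Rightarrow> 's \<Rightarrow> 'v) \<Rightarrow> ('n \<Rightarrow> 'v) \<Rightarrow> ('n \<Rightarrow> 's) \<Rightarrow> 'n \<Rightarrow> 'n \<Rightarrow> 'v" where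
  "sg gradF x xi a b = gradF (x b) (xi a)"

definition coal_val :: "('v::real_vector \<Rightarrow> 's \<Rightarrow> 'v) \<Rightarrow> ('s \<Rightarrow> 'v \<Rightarrow> real) \<Rightarrow> 's set \<Rightarrow> real
     \<Rightarrow> ('n \<Rightarrow> 'v) \<Rightarrow> ('n \<Rightarrow> 's) \<Rightarrow> 'n \<Rightarrow> 'n set \<Rightarrow> real" where
  "coal_val gradF J Q \<gamma> x xi i S =
     (if S = {} then 0 else
      (1 / real (card Q)) * (\<Sum>q\<in>Q. J q ((1 / real (card S)) *\<^sub>R
          (\<Sum>j\<in>S. x i - \<gamma> *\<^sub>R sg gradF x xi j i))))"

definition shapley :: "real^'n^'n \<Rightarrow> ('v::real_vector \<Rightarrow> 's \<Rightarrow> 'v) \<Rightarrow> ('s \<Rightarrow> 'v \<Rightarrow> real) \<Rightarrow> 's set \<Rightarrow> real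
     \<Rightarrow> ('n \<Rightarrow> 'v) \<Rightarrow> ('n \<Rightarrow> 's) \<Rightarrow> 'n \<Rightarrow> 'n \<Rightarrow> real" where
  "shapley W gradF J Q \<gamma> x xi i j =
     (\<Sum>S\<in>Pow (nbhd W i - {j}).
        (coal_val gradF J Q \<gamma> x xi i (insert j S) - coal_val gradF J Q \<gamma> x xi i S) /
        (real (card (nbhd W i)) * real (card (nbhd W i) - 1 choose card S)))"

definition shapley_norm :: "real^'n^'n \<Rightarrow> ('v::real_vector \<Rightarrow> 's \<Rightarrow> 'v) \<Rightarrow> ('s \<Rightarrow> 'v \<Rightarrow> real) \<Rightarrow> 's set \<Rightarrow> real
     \<Rightarrow> ('n \<Rightarrow> 'v) \<Rightarrow> ('n \<Rightarrow> 's) \<Rightarrow> 'n \<Rightarrow> 'n \<Rightarrow> real" where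
  "shapley_norm W gradF J Q \<gamma> x xi i j =
     (let \<phi> = shapley W gradF J Q \<gamma> x xi i;
          mn = Min (\<phi> ` nbhd W i); mx = Max (\<phi> ` nbhd W i)
      in (\<phi> j - mn) / (mx - mn))"

definition ross_weight :: "real^'n^'n \<Rightarrow> ('v::real_vector \<Rightarrow> 's \<Rightarrow> 'v) \<Rightarrow> ('s \<Rightarrow> 'v \<Rightarrow> real) \<Rightarrow> 's set \<Rightarrow> real
     \<Rightarrow> ('n \<Rightarrow> 'v) \<Rightarrow> ('n \<Rightarrow> 's) \<Rightarrow> 'n \<Rightarrow> 'n \<Rightarrow> real" where
  "ross_weight W gradF J Q \<gamma> x xi i j =
     shapley_norm W gradF J Q \<gamma> x xi i j /
       (W $ i $ j * (\<Sum>k\<in>nbhd W i. shapley_norm W gradF J Q \<gamma> x xi i k))"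

definition ross_gbar :: "real^'n^'n \<Rightarrow> ('v::real_vector \<Rightarrow> 's \<Rightarrow> 'v) \<Rightarrow> ('s \<Rightarrow> 'v \<Rightarrow> real) \<Rightarrow> 's set \<Rightarrow> real
     \<Rightarrow> ('n \<Rightarrow> 'v) \<Rightarrow> ('n \<Rightarrow> 's) \<Rightarrow> 'n \<Rightarrow> 'v" where
  "ross_gbar W gradF J Q \<gamma> x xi i =
     (\<Sum>j\<in>nbhd W i. ross_weight W gradF J Q \<gamma> x xi i j *\<^sub>R sg gradF x xi j i)"

definition ross_step :: "real^'n^'n \<Rightarrow> ('v::real_vector \<Rightarrow> 's \<Rightarrow> 'v) \<Rightarrow> ('s \<Rightarrow> 'v \<Rightarrow> real) \<Rightarrow> 's set \<Rightarrow> real \<Rightarrow> real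
     \<Rightarrow> ('n \<Rightarrow> 'v) \<times> ('n \<Rightarrow> 'v) \<Rightarrow> ('n \<Rightarrow> 's) \<Rightarrow> ('n \<Rightarrow> 'v) \<times> ('n \<Rightarrow> 'v)" where
  "ross_step W gradF J Q \<gamma> \<alpha> st xi =
     (let x = fst st; u = snd st;
          uh = (\<lambda>i. \<alpha> *\<^sub>R u i + ross_gbar W gradF J Q \<gamma> x xi i);
          xh = (\<lambda>i. x i - \<gamma> *\<^sub>R uh i)
      in ((\<lambda>i. \<Sum>j\<in>nbhd W i. W $ i $ j *\<^sub>R xh j),
          (\<lambda>i. \<Sum>j\<in>nbhd W i. W $ i $ j *\<^sub>R uh j)))"

text \<open>ross_state ... xi t = (x^[t], u^[t]) where xi a t is the sample of agent a in round t
  (rounds t = 1, 2, ...); x^[0]_i = x0, u^[0]_i = 0.\<close>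
primrec ross_state :: "real^'n^'n \<Rightarrow> ('v::real_vector \<Rightarrow> 's \<Rightarrow> 'v) \<Rightarrow> ('s \<Rightarrow> 'v \<Rightarrow> real) \<Rightarrow> 's set \<Rightarrow> real \<Rightarrow> real
     \<Rightarrow> 'v \<Rightarrow> ('n \<Rightarrow> nat \<Rightarrow> 's) \<Rightarrow> nat \<Rightarrow> ('n \<Rightarrow> 'v) \<times> ('n \<Rightarrow> 'v)" where
  "ross_state W gradF J Q \<gamma> \<alpha> x0 xi 0 = (\<lambda>i. x0, \<lambda>i. 0)"
| "ross_state W gradF J Q \<gamma> \<alpha> x0 xi (Suc t) =
     ross_step W gradF J Q \<gamma> \<alpha> (ross_state W gradF J Q \<gamma> \<alpha> x0 xi t) (\<lambda>a. xi a (Suc t))"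

end

theory Submission
  imports Defs
begin

lemma sq_sum_le_card:
  fixes a :: "'i \<Rightarrow> real"
  shows "(\<Sum>i\<in>A. a i)\<^sup>2 \<le> real (card A) * (\<Sum>i\<in>A. (a i)\<^sup>2)"
  using Cauchy_Schwarz_ineq_sum[of "\<lambda>_. 1" a A] by simp

lemma norm_avg_sq:
  fixes v :: "'i \<Rightarrow> 'v::real_normed_vector"
  assumes "finite A" "A \<noteq> {}"
  shows "(norm ((1 / real (card A)) *\<^sub>R (\<Sum>i\<in>A. v i)))\<^sup>2 \<le> (1 / real (card A)) * (\<Sum>i\<in>A. (norm (v i))\<^sup>2)"
proof -
  have c: "real (card A) > 0" using assms by auto
  have "norm (\<Sum>i\<in>A. v i) \<le> (\<Sum>i\<in>A. norm (v i))" by (rule norm_sum)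
  hence "(norm (\<Sum>i\<in>A. v i))\<^sup>2 \<le> (\<Sum>i\<in>A. norm (v i))\<^sup>2"
    by (simp add: power_mono)
  also have "\<dots> \<le> real (card A) * (\<Sum>i\<in>A. (norm (v i))\<^sup>2)" by (rule sq_sum_le_card)
  finally have h: "(norm (\<Sum>i\<in>A. v i))\<^sup>2 \<le> real (card A) * (\<Sum>i\<in>A. (norm (v i))\<^sup>2)" .
  have "(norm ((1 / real (card A)) *\<^sub>R (\<Sum>i\<in>A. v i)))\<^sup>2 = (norm (\<Sum>i\<in>A. v i))\<^sup>2 / (real (card A))\<^sup>2"
    using c by (simp add: power_divide)
  also have "\<dots> \<le> real (card A) * (\<Sum>i\<in>A. (norm (v i))\<^sup>2) / (real (card A))\<^sup>2"
    using h c by (simp add: divide_right_mono)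
  also have "\<dots> = (1 / real (card A)) * (\<Sum>i\<in>A. (norm (v i))\<^sup>2)"
    using c by (simp add: power2_eq_square field_simps)
  finally show ?thesis .
qed

lemma norm_wsum_sq:
  fixes n :: "'i \<Rightarrow> 'v::real_normed_vector"
  assumes "\<And>i. i \<in> A \<Longrightarrow> w i \<ge> 0"
  shows "(norm (\<Sum>i\<in>A. w i *\<^sub>R n i))\<^sup>2 \<le> (\<Sum>i\<in>A. w i) * (\<Sum>i\<in>A. w i * (norm (n i))\<^sup>2)"
proof -
  have "norm (\<Sum>i\<in>A. w i *\<^sub>R n i) \<le> (\<Sum>i\<in>A. norm (w i *\<^sub>R n i))" by (rule norm_sum)
  also have "\<dots> = (\<Sum>i\<in>A. sqrt (w i) * (sqrt (w i) * norm (n i)))"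
    using assms by (intro sum.cong) (auto simp: real_sqrt_mult[symmetric] mult.assoc[symmetric])
  finally have h: "norm (\<Sum>i\<in>A. w i *\<^sub>R n i) \<le> (\<Sum>i\<in>A. sqrt (w i) * (sqrt (w i) * norm (n i)))" .
  have "(norm (\<Sum>i\<in>A. w i *\<^sub>R n i))\<^sup>2 \<le> (\<Sum>i\<in>A. sqrt (w i) * (sqrt (w i) * norm (n i)))\<^sup>2"
    using h by (simp add: power_mono)
  also have "\<dots> \<le> (\<Sum>i\<in>A. (sqrt (w i))\<^sup>2) * (\<Sum>i\<in>A. (sqrt (w i) * norm (n i))\<^sup>2)"
    by (rule Cauchy_Schwarz_ineq_sum)
  also have "\<dots> = (\<Sum>i\<in>A. w i) * (\<Sum>i\<in>A. w i * (norm (n i))\<^sup>2)"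
    using assms by (simp add: power_mult_distrib)
  finally show ?thesis .
qed

lemma norm_diff_sq_le: "(norm (a - b :: 'v::real_normed_vector))\<^sup>2 \<le> 3/2 * (norm a)\<^sup>2 + 3 * (norm b)\<^sup>2"
proof -
  have "norm (a - b) \<le> norm a + norm b" by (rule norm_triangle_ineq4)
  hence "(norm (a - b))\<^sup>2 \<le> (norm a + norm b)\<^sup>2" by (simp add: power_mono)
  also have "\<dots> \<le> 3/2 * (norm a)\<^sup>2 + 3 * (norm b)\<^sup>2"
  proof -
    have "0 \<le> (norm a - 2 * norm b)\<^sup>2" by simp
    thus ?thesis by (simp add: power2_eq_square algebra_simps)
  qed
  finally show ?thesis .
qed

lemma norm_add_sq_le: "(norm (a + b :: 'v::real_normed_vector))\<^sup>2 \<le> 2 * (norm a)\<^sup>2 + 2 * (norm b)\<^sup>2"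
proof -
  have "norm (a + b) \<le> norm a + norm b" by (rule norm_triangle_ineq)
  hence "(norm (a + b))\<^sup>2 \<le> (norm a + norm b)\<^sup>2" by (simp add: power_mono)
  also have "\<dots> \<le> 2 * (norm a)\<^sup>2 + 2 * (norm b)\<^sup>2"
  proof -
    have "0 \<le> (norm a - norm b)\<^sup>2" by simp
    thus ?thesis by (simp add: power2_eq_square algebra_simps)
  qed
  finally show ?thesis .
qed

lemma four_sq_le: "((a::real) + b + c + d)\<^sup>2 \<le> 4 * (a\<^sup>2 + b\<^sup>2 + c\<^sup>2 + d\<^sup>2)"
proof -
  have "0 \<le> (a-b)\<^sup>2 + (a-c)\<^sup>2 + (a-d)\<^sup>2 + (b-c)\<^sup>2 + (b-d)\<^sup>2 + (c-d)\<^sup>2" by simp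
  thus ?thesis by (simp add: power2_eq_square algebra_simps)
qed

lemma pointwise:
  fixes x :: "'n::finite \<Rightarrow> 'v::real_normed_vector" and g :: "'n \<Rightarrow> 'n \<Rightarrow> 'v"
    and gf :: "'n \<Rightarrow> 'v \<Rightarrow> 'v" and p :: "'n \<Rightarrow> 'n \<Rightarrow> real" and Nb :: "'n \<Rightarrow> 'n set"
  assumes u2: "u \<ge> 2" and L0: "L \<ge> 0" and z0: "\<zeta> \<ge> 0"
    and p_nn: "\<And>i j. p i j \<ge> 0" and p_le: "\<And>i j. p i j \<le> u"
    and p_sum: "\<And>i. (\<Sum>j\<in>Nb i. p i j) \<le> u"
    and het: "\<And>i y. norm (gf i y - (1 / real CARD('n)) *\<^sub>R (\<Sum>k\<in>UNIV. gf k y)) \<le> \<zeta>"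
    and lip: "\<And>i y z. norm (gf i y - gf i z) \<le> L * norm (y - z)"
  shows "(norm ((1 / real CARD('n)) *\<^sub>R (\<Sum>i\<in>UNIV. (\<Sum>j\<in>Nb i. p i j *\<^sub>R g j i) - g i i)))\<^sup>2
    \<le> 3 * u\<^sup>2 / real CARD('n) * (\<Sum>i\<in>UNIV. \<Sum>j\<in>Nb i. (norm (g j i - gf j (x i)))\<^sup>2)
      + 6 / real CARD('n) * (\<Sum>i\<in>UNIV. (norm (g i i - gf i (x i)))\<^sup>2)
      + 8 * \<zeta>\<^sup>2 * u ^ 4
      + 16 * L\<^sup>2 * u ^ 4 / real CARD('n) * (\<Sum>i\<in>UNIV. (norm (x i - (1 / real CARD('n)) *\<^sub>R (\<Sum>k\<in>UNIV. x k)))\<^sup>2)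
      + (8 * u ^ 4 + 2) * (norm ((1 / real CARD('n)) *\<^sub>R (\<Sum>i\<in>UNIV. gf i (x i))))\<^sup>2"
proof -
  define N where "N = real CARD('n)"
  have N0: "N > 0" unfolding N_def by simp
  have cardU: "real (card (UNIV :: 'n set)) = N" unfolding N_def by simp
  define n where "n j i = g j i - gf j (x i)" for j i
  define A where "A i = (\<Sum>j\<in>Nb i. p i j *\<^sub>R n j i)" for i
  define C where "C i = (\<Sum>j\<in>Nb i. p i j *\<^sub>R gf j (x i)) - gf i (x i)" for i
  define Fb where "Fb y = (1 / N) *\<^sub>R (\<Sum>k\<in>UNIV. gf k y)" for y
  define P where "P = (1 / N) *\<^sub>R (\<Sum>i\<in>UNIV. gf i (x i))"
  define xb where "xb = (1 / N) *\<^sub>R (\<Sum>k\<in>UNIV. x k)"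
  define d where "d i = norm (x i - xb)" for i
  define S where "S = (\<Sum>i\<in>UNIV. (d i)\<^sup>2)"
  define db where "db = (1 / N) * (\<Sum>k\<in>UNIV. d k)"
  have eq: "(\<Sum>j\<in>Nb i. p i j *\<^sub>R g j i) - g i i = (A i - n i i) + C i" for i
  proof -
    have "(\<Sum>j\<in>Nb i. p i j *\<^sub>R g j i) = (\<Sum>j\<in>Nb i. p i j *\<^sub>R n j i + p i j *\<^sub>R gf j (x i))"
      by (intro sum.cong) (auto simp: n_def scaleR_diff_right)
    also have "\<dots> = A i + (\<Sum>j\<in>Nb i. p i j *\<^sub>R gf j (x i))"
      by (simp add: A_def sum.distrib)
    finally show ?thesis by (simp add: C_def n_def)
  qed
  have avg_split: "(1 / N) *\<^sub>R (\<Sum>i\<in>UNIV. (\<Sum>j\<in>Nb i. p i j *\<^sub>R g j i) - g i i)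
      = (1 / N) *\<^sub>R (\<Sum>i\<in>UNIV. A i - n i i) + (1 / N) *\<^sub>R (\<Sum>i\<in>UNIV. C i)"
    by (simp add: eq sum.distrib scaleR_add_right)
  have A_bd: "(norm (A i))\<^sup>2 \<le> u\<^sup>2 * (\<Sum>j\<in>Nb i. (norm (n j i))\<^sup>2)" for i
  proof -
    have "(norm (A i))\<^sup>2 \<le> (\<Sum>j\<in>Nb i. p i j) * (\<Sum>j\<in>Nb i. p i j * (norm (n j i))\<^sup>2)"
      unfolding A_def by (rule norm_wsum_sq) (simp add: p_nn)
    also have "\<dots> \<le> u * (\<Sum>j\<in>Nb i. u * (norm (n j i))\<^sup>2)"
      by (intro mult_mono p_sum sum_mono mult_right_mono p_le sum_nonneg mult_nonneg_nonneg p_nn) (use u2 in auto)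
    also have "\<dots> = u\<^sup>2 * (\<Sum>j\<in>Nb i. (norm (n j i))\<^sup>2)"
      by (simp add: sum_distrib_left[symmetric] power2_eq_square)
    finally show ?thesis .
  qed
  have part1: "(norm ((1 / N) *\<^sub>R (\<Sum>i\<in>UNIV. A i - n i i)))\<^sup>2
      \<le> 3 / 2 * u\<^sup>2 / N * (\<Sum>i\<in>UNIV. \<Sum>j\<in>Nb i. (norm (n j i))\<^sup>2) + 3 / N * (\<Sum>i\<in>UNIV. (norm (n i i))\<^sup>2)"
  proof -
    have "(norm ((1 / N) *\<^sub>R (\<Sum>i\<in>UNIV. A i - n i i)))\<^sup>2 \<le> (1 / N) * (\<Sum>i\<in>UNIV. (norm (A i - n i i))\<^sup>2)"
      using norm_avg_sq[of "UNIV :: 'n set" "\<lambda>i. A i - n i i"] by (simp add: cardU)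
    also have "\<dots> \<le> (1 / N) * (\<Sum>i\<in>UNIV. (3/2 * u\<^sup>2) * (\<Sum>j\<in>Nb i. (norm (n j i))\<^sup>2) + 3 * (norm (n i i))\<^sup>2)"
    proof (intro mult_left_mono sum_mono)
      fix i
      show "(norm (A i - n i i))\<^sup>2 \<le> (3/2 * u\<^sup>2) * (\<Sum>j\<in>Nb i. (norm (n j i))\<^sup>2) + 3 * (norm (n i i))\<^sup>2"
        using norm_diff_sq_le[of "A i" "n i i"] A_bd[of i] by linarith
    qed (use N0 in auto)
    also have "\<dots> = 3 / 2 * u\<^sup>2 / N * (\<Sum>i\<in>UNIV. \<Sum>j\<in>Nb i. (norm (n j i))\<^sup>2) + 3 / N * (\<Sum>i\<in>UNIV. (norm (n i i))\<^sup>2)"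
      by (simp only: sum.distrib sum_distrib_left[symmetric] distrib_left) (simp add: field_simps)
    finally show ?thesis .
  qed
  have dbsq: "db\<^sup>2 \<le> S / N"
  proof -
    have "db\<^sup>2 = (\<Sum>k\<in>UNIV. d k)\<^sup>2 / N\<^sup>2" unfolding db_def by (simp add: power_divide)
    also have "\<dots> \<le> (N * S) / N\<^sup>2"
      using sq_sum_le_card[of d "UNIV :: 'n set"] N0 by (intro divide_right_mono) (auto simp: cardU S_def)
    also have "\<dots> = S / N" using N0 by (simp add: power2_eq_square)
    finally show ?thesis .
  qed
  have Fb_bd: "norm (Fb (x i)) \<le> norm P + L * d i + L * db" for i
  proof -
    have "Fb (x i) - P = (1 / N) *\<^sub>R (\<Sum>k\<in>UNIV. gf k (x i) - gf k (x k))"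
      by (simp add: Fb_def P_def sum_subtractf scaleR_diff_right)
    hence "norm (Fb (x i) - P) = (1 / N) * norm (\<Sum>k\<in>UNIV. gf k (x i) - gf k (x k))"
      using N0 by simp
    also have "\<dots> \<le> (1 / N) * (\<Sum>k\<in>UNIV. L * (d i + d k))"
    proof (intro mult_left_mono)
      have "norm (\<Sum>k\<in>UNIV. gf k (x i) - gf k (x k)) \<le> (\<Sum>k\<in>UNIV. norm (gf k (x i) - gf k (x k)))"
        by (rule norm_sum)
      also have "\<dots> \<le> (\<Sum>k\<in>UNIV. L * (d i + d k))"
      proof (intro sum_mono)
        fix k
        have "norm (x i - x k) \<le> d i + d k"
          unfolding d_def using norm_triangle_ineq4[of "x i - xb" "x k - xb"] by simp
        hence "L * norm (x i - x k) \<le> L * (d i + d k)" using L0 by (simp add: mult_left_mono)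
        thus "norm (gf k (x i) - gf k (x k)) \<le> L * (d i + d k)" using lip[of k "x i" "x k"] by linarith
      qed
      finally show "norm (\<Sum>k\<in>UNIV. gf k (x i) - gf k (x k)) \<le> (\<Sum>k\<in>UNIV. L * (d i + d k))" .
    qed (use N0 in auto)
    also have "\<dots> = L * d i + L * db"
      using N0 by (simp add: db_def sum.distrib sum_distrib_left[symmetric] cardU algebra_simps)
    finally have "norm (Fb (x i) - P) \<le> L * d i + L * db" .
    thus ?thesis using norm_triangle_ineq2[of "Fb (x i)" P] by linarith
  qed
  have C_bd: "norm (C i) \<le> u * norm P + u * L * d i + u * L * db + 2 * u * \<zeta>" for i
  proof -
    define s where "s = (\<Sum>j\<in>Nb i. p i j)"
    have s0: "0 \<le> s" unfolding s_def by (simp add: sum_nonneg p_nn)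
    have su: "s \<le> u" unfolding s_def by (rule p_sum)
    have Ceq: "C i = (s - 1) *\<^sub>R Fb (x i) + (\<Sum>j\<in>Nb i. p i j *\<^sub>R (gf j (x i) - Fb (x i))) - (gf i (x i) - Fb (x i))"
      by (simp add: C_def s_def scaleR_diff_right sum_subtractf scaleR_left_diff_distrib scaleR_sum_left algebra_simps)
    have n1: "norm ((s - 1) *\<^sub>R Fb (x i)) \<le> u * norm (Fb (x i))"
    proof -
      have "\<bar>s - 1\<bar> \<le> u" using s0 su u2 by auto
      thus ?thesis by (simp add: mult_right_mono)
    qed
    have n2: "norm (\<Sum>j\<in>Nb i. p i j *\<^sub>R (gf j (x i) - Fb (x i))) \<le> u * \<zeta>"
    proof -
      have "norm (\<Sum>j\<in>Nb i. p i j *\<^sub>R (gf j (x i) - Fb (x i))) \<le> (\<Sum>j\<in>Nb i. norm (p i j *\<^sub>R (gf j (x i) - Fb (x i))))"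
        by (rule norm_sum)
      also have "\<dots> \<le> (\<Sum>j\<in>Nb i. p i j * \<zeta>)"
        using het p_nn by (intro sum_mono) (auto simp: Fb_def N_def intro: mult_left_mono)
      also have "\<dots> = s * \<zeta>" by (simp add: s_def sum_distrib_right)
      also have "\<dots> \<le> u * \<zeta>" using su z0 by (simp add: mult_right_mono)
      finally show ?thesis .
    qed
    have n3: "norm (gf i (x i) - Fb (x i)) \<le> u * \<zeta>"
    proof -
      have "norm (gf i (x i) - Fb (x i)) \<le> \<zeta>" using het by (simp add: Fb_def N_def)
      also have "\<zeta> \<le> u * \<zeta>" using u2 z0 by (simp add: mult_le_cancel_right1)
      finally show ?thesis .
    qed
    have "norm (C i) \<le> u * norm (Fb (x i)) + u * \<zeta> + u * \<zeta>"
      unfolding Ceq using n1 n2 n3 norm_triangle_ineq[of "(s - 1) *\<^sub>R Fb (x i) + (\<Sum>j\<in>Nb i. p i j *\<^sub>R (gf j (x i) - Fb (x i)))" "- (gf i (x i) - Fb (x i))"]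
        norm_triangle_ineq[of "(s - 1) *\<^sub>R Fb (x i)" "(\<Sum>j\<in>Nb i. p i j *\<^sub>R (gf j (x i) - Fb (x i)))"]
      by (simp only: diff_conv_add_uminus norm_minus_cancel)
    also have "\<dots> \<le> u * (norm P + L * d i + L * db) + 2 * u * \<zeta>"
      using Fb_bd[of i] u2 by (simp add: mult_left_mono)
    finally show ?thesis by (simp add: algebra_simps)
  qed
  have C_sq: "(norm (C i))\<^sup>2 \<le> 4 * u\<^sup>2 * ((norm P)\<^sup>2 + L\<^sup>2 * (d i)\<^sup>2 + L\<^sup>2 * db\<^sup>2 + 4 * \<zeta>\<^sup>2)" for i
  proof -
    have d0: "d i \<ge> 0" "db \<ge> 0" unfolding d_def db_def using N0 by (auto intro!: sum_nonneg divide_nonneg_pos)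
    have "(norm (C i))\<^sup>2 \<le> (u * norm P + u * L * d i + u * L * db + 2 * u * \<zeta>)\<^sup>2"
      using C_bd[of i] by (simp add: power_mono)
    also have "\<dots> \<le> 4 * ((u * norm P)\<^sup>2 + (u * L * d i)\<^sup>2 + (u * L * db)\<^sup>2 + (2 * u * \<zeta>)\<^sup>2)"
      by (rule four_sq_le)
    also have "\<dots> = 4 * u\<^sup>2 * ((norm P)\<^sup>2 + L\<^sup>2 * (d i)\<^sup>2 + L\<^sup>2 * db\<^sup>2 + 4 * \<zeta>\<^sup>2)"
      by (simp add: power_mult_distrib algebra_simps)
    finally show ?thesis .
  qed
  have part2: "(norm ((1 / N) *\<^sub>R (\<Sum>i\<in>UNIV. C i)))\<^sup>2 \<le> 4 * u\<^sup>2 * (norm P)\<^sup>2 + 8 * u\<^sup>2 * L\<^sup>2 * S / N + 16 * u\<^sup>2 * \<zeta>\<^sup>2"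
  proof -
    have "(norm ((1 / N) *\<^sub>R (\<Sum>i\<in>UNIV. C i)))\<^sup>2 \<le> (1 / N) * (\<Sum>i\<in>UNIV. (norm (C i))\<^sup>2)"
      using norm_avg_sq[of "UNIV :: 'n set" C] by (simp add: cardU)
    also have "\<dots> \<le> (1 / N) * (\<Sum>i\<in>UNIV. 4 * u\<^sup>2 * ((norm P)\<^sup>2 + L\<^sup>2 * (d i)\<^sup>2 + L\<^sup>2 * db\<^sup>2 + 4 * \<zeta>\<^sup>2))"
      using C_sq N0 by (intro mult_left_mono sum_mono) auto
    also have "\<dots> = 4 * u\<^sup>2 * (norm P)\<^sup>2 + 4 * u\<^sup>2 * L\<^sup>2 * S / N + 4 * u\<^sup>2 * L\<^sup>2 * db\<^sup>2 + 16 * u\<^sup>2 * \<zeta>\<^sup>2"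
      using N0 by (simp add: sum.distrib sum_distrib_left[symmetric] cardU S_def algebra_simps)
    also have "\<dots> \<le> 4 * u\<^sup>2 * (norm P)\<^sup>2 + 4 * u\<^sup>2 * L\<^sup>2 * S / N + 4 * u\<^sup>2 * L\<^sup>2 * (S / N) + 16 * u\<^sup>2 * \<zeta>\<^sup>2"
      by (intro add_right_mono add_left_mono mult_left_mono dbsq) simp
    also have "\<dots> = 4 * u\<^sup>2 * (norm P)\<^sup>2 + 8 * u\<^sup>2 * L\<^sup>2 * S / N + 16 * u\<^sup>2 * \<zeta>\<^sup>2"
      by (simp add: field_simps)
    finally show ?thesis .
  qed
  have main: "(norm ((1 / N) *\<^sub>R (\<Sum>i\<in>UNIV. (\<Sum>j\<in>Nb i. p i j *\<^sub>R g j i) - g i i)))\<^sup>2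
     \<le> 3 * u\<^sup>2 / N * (\<Sum>i\<in>UNIV. \<Sum>j\<in>Nb i. (norm (n j i))\<^sup>2) + 6 / N * (\<Sum>i\<in>UNIV. (norm (n i i))\<^sup>2)
       + 8 * u\<^sup>2 * (norm P)\<^sup>2 + 16 * u\<^sup>2 * L\<^sup>2 * S / N + 32 * u\<^sup>2 * \<zeta>\<^sup>2"
    unfolding avg_split using norm_add_sq_le[of "(1 / N) *\<^sub>R (\<Sum>i\<in>UNIV. A i - n i i)" "(1 / N) *\<^sub>R (\<Sum>i\<in>UNIV. C i)"] part1 part2
    by simp
  have u4: "u\<^sup>2 \<le> u ^ 4" "4 * u\<^sup>2 \<le> u ^ 4"
  proof -
    have h4: "4 \<le> u\<^sup>2" using power_mono[OF u2, of 2] by simp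
    have e: "u ^ 4 = u\<^sup>2 * u\<^sup>2" by (simp flip: power_add)
    have "4 * u\<^sup>2 \<le> u\<^sup>2 * u\<^sup>2" using mult_right_mono[OF h4, of "u\<^sup>2"] by simp
    thus "4 * u\<^sup>2 \<le> u ^ 4" using e by linarith
    moreover have "0 \<le> u\<^sup>2" by simp
    ultimately show "u\<^sup>2 \<le> u ^ 4" by linarith
  qed
  have S0: "S \<ge> 0" unfolding S_def by (simp add: sum_nonneg)
  have r1: "8 * u\<^sup>2 * (norm P)\<^sup>2 \<le> (8 * u ^ 4 + 2) * (norm P)\<^sup>2"
    using u4 by (intro mult_right_mono) auto
  have r2: "16 * u\<^sup>2 * L\<^sup>2 * S / N \<le> 16 * L\<^sup>2 * u ^ 4 / N * S"
  proof -
    have "16 * L\<^sup>2 * S / N \<ge> 0" using S0 N0 by simp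
    hence "u\<^sup>2 * (16 * L\<^sup>2 * S / N) \<le> u ^ 4 * (16 * L\<^sup>2 * S / N)"
      using u4(1) by (rule mult_right_mono[rotated])
    thus ?thesis by (simp add: algebra_simps)
  qed
  have r3: "32 * u\<^sup>2 * \<zeta>\<^sup>2 \<le> 8 * \<zeta>\<^sup>2 * u ^ 4"
    using mult_left_mono[OF u4(2), of "8 * \<zeta>\<^sup>2"] by (simp add: algebra_simps)
  have fin: "(norm ((1 / N) *\<^sub>R (\<Sum>i\<in>UNIV. (\<Sum>j\<in>Nb i. p i j *\<^sub>R g j i) - g i i)))\<^sup>2
     \<le> 3 * u\<^sup>2 / N * (\<Sum>i\<in>UNIV. \<Sum>j\<in>Nb i. (norm (n j i))\<^sup>2) + 6 / N * (\<Sum>i\<in>UNIV. (norm (n i i))\<^sup>2)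
       + 8 * \<zeta>\<^sup>2 * u ^ 4 + 16 * L\<^sup>2 * u ^ 4 / N * S + (8 * u ^ 4 + 2) * (norm P)\<^sup>2"
    using main r1 r2 r3 by linarith
  show ?thesis using fin unfolding N_def n_def P_def S_def d_def xb_def .
qed

lemma degree_det_le:
  fixes A :: "'a::{comm_ring_1,idom} poly^'n::finite^'n"
  assumes "\<And>i j. degree (A$i$j) \<le> 1"
  shows "degree (det A) \<le> CARD('n)"
  unfolding det_def
proof (intro degree_sum_le)
  fix p assume "p \<in> {p. p permutes (UNIV :: 'n set)}"
  have "degree (prod (\<lambda>i. A$i$p i) UNIV) \<le> sum (degree \<circ> (\<lambda>i. A$i$p i)) UNIV"
    by (rule degree_prod_sum_le) simp
  also have "\<dots> \<le> sum (\<lambda>_. 1) (UNIV :: 'n set)"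
    by (intro sum_mono) (simp only: comp_def assms)
  finally have h: "degree (prod (\<lambda>i. A$i$p i) UNIV) \<le> CARD('n)" by simp
  have "degree (of_int (sign p) * prod (\<lambda>i. A$i$p i) UNIV) \<le> degree (of_int (sign p) :: 'a poly) + degree (prod (\<lambda>i. A$i$p i) UNIV)"
    by (rule degree_mult_le)
  also have "degree (of_int (sign p) :: 'a poly) = 0" by (simp add: of_int_poly)
  finally show "degree (of_int (sign p) * prod (\<lambda>i. A$i$p i) UNIV) \<le> CARD('n)" using h by simp
qed simp

lemma sum_pconst: "(\<Sum>k\<in>A. [:f k:]) = [:\<Sum>k\<in>A. f k:]"
  by (induct A rule: infinite_finite_induct) auto

lemma char_prod:
  fixes W :: "real^'n::finite^'n"
  assumes WW: "\<And>i j. (\<Sum>k\<in>UNIV. W$i$k * W$k$j) = (if i = j then 1 else 0)"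
  shows "(\<chi> i j. if i = j then [:- (W $ i $ j), 1:] else [:- (W $ i $ j):]) **
         (\<chi> i j. if i = j then [:W $ i $ j, 1:] else [:W $ i $ j:])
       = (\<chi> i j. if i = j then [:-1, 0, 1:] else 0)"
proof -
  define X :: "real poly" where "X = [:0, 1:]"
  have A: "(if i = j then [:- (W $ i $ j), 1:] else [:- (W $ i $ j):]) = (if i = j then X else 0) - [:W$i$j:]" for i j
    by (auto simp: X_def)
  have B: "(if i = j then [:(W $ i $ j), 1:] else [:(W $ i $ j):]) = (if i = j then X else 0) + [:W$i$j:]" for i j
    by (auto simp: X_def)
  have "(\<Sum>k\<in>UNIV. ((if i = k then X else 0) - [:W$i$k:]) * ((if k = j then X else 0) + [:W$k$j:]))
      = (if i = j then [:-1, 0, 1:] else 0)" for i j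
  proof -
    have pt: "((if i = k then X else 0) - [:W$i$k:]) * ((if k = j then X else 0) + [:W$k$j:])
        = (if i = k \<and> k = j then X * X else 0) + (if i = k then X * [:W$k$j:] else 0)
          - (if k = j then [:W$i$k:] * X else 0) - [:W$i$k * W$k$j:]" for k
      by (cases "i = k"; cases "k = j") (simp_all add: algebra_simps)
    have "(\<Sum>k\<in>UNIV. ((if i = k then X else 0) - [:W$i$k:]) * ((if k = j then X else 0) + [:W$k$j:]))
      = (\<Sum>k\<in>UNIV. (if i = k \<and> k = j then X * X else 0)) + (\<Sum>k\<in>UNIV. (if i = k then X * [:W$k$j:] else 0))
        - (\<Sum>k\<in>UNIV. (if k = j then [:W$i$k:] * X else 0)) - (\<Sum>k\<in>UNIV. [:W$i$k * W$k$j:])"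
      unfolding pt by (simp only: sum.distrib sum_subtractf)
    also have "(\<Sum>k\<in>UNIV. [:W$i$k * W$k$j:]) = [:\<Sum>k\<in>UNIV. W$i$k * W$k$j:]"
      by (rule sum_pconst)
    also have "(\<Sum>k\<in>UNIV. (if i = k \<and> k = j then X * X else 0)) = (if i = j then X * X else 0)"
    proof -
      have "(\<lambda>k. if i = k \<and> k = j then X * X else 0) = (\<lambda>k. if i = k then (if i = j then X * X else 0) else 0)"
        by auto
      hence "(\<Sum>k\<in>UNIV. (if i = k \<and> k = j then X * X else 0)) = (\<Sum>k\<in>UNIV. if i = k then (if i = j then X * X else 0) else 0)"
        by (rule arg_cong)
      also have "\<dots> = (if i = j then X * X else 0)" by (subst sum.delta') auto
      finally show ?thesis .
    qed
    also have "(\<Sum>k\<in>UNIV. (if i = k then X * [:W$k$j:] else 0)) = X * [:W$i$j:]"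
      by simp
    also have "(\<Sum>k\<in>UNIV. (if k = j then [:W$i$k:] * X else 0)) = X * [:W$i$j:]"
      by (simp add: mult.commute)
    finally show ?thesis by (simp add: WW X_def)
  qed
  thus ?thesis unfolding matrix_matrix_mult_def
    by (simp add: vec_eq_iff A B)
qed

lemma omega_facts:
  fixes W :: "real^'n::finite^'n"
  assumes ds: "doubly_stochastic_sym W"
  shows "omega_min W > 0" "\<And>i j. W$i$j > 0 \<Longrightarrow> omega_min W \<le> W$i$j"
proof -
  define S where "S = {W $ i $ j | i j. 0 < W $ i $ j}"
  have fin: "finite S"
  proof -
    have "S \<subseteq> (\<lambda>(i,j). W$i$j) ` UNIV" unfolding S_def by auto
    thus ?thesis by (rule finite_subset) simp
  qed
  obtain i0 :: 'n where True by simp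
  have "\<exists>j. W$i0$j > 0"
  proof (rule ccontr)
    assume "\<not> ?thesis"
    hence "\<forall>j. W$i0$j \<le> 0" by (simp add: not_less)
    hence "(\<Sum>j\<in>UNIV. W$i0$j) \<le> 0" by (simp add: sum_nonpos)
    moreover have "(\<Sum>j\<in>UNIV. W$i0$j) = 1" using ds unfolding doubly_stochastic_sym_def by blast
    ultimately show False by linarith
  qed
  hence ne: "S \<noteq> {}" unfolding S_def by auto
  have "Min S \<in> S" using fin ne by (rule Min_in)
  thus "omega_min W > 0" unfolding omega_min_def S_def[symmetric] by (auto simp: S_def)
  show "\<And>i j. W$i$j > 0 \<Longrightarrow> omega_min W \<le> W$i$j"
    unfolding omega_min_def S_def[symmetric] using fin by (intro Min_le) (auto simp: S_def)
qed

lemma omega_le_half: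
  fixes W :: "real^'n::finite^'n"
  assumes ds: "doubly_stochastic_sym W"
    and gap: "max \<bar>eig_k W 2\<bar> \<bar>eig_k W CARD('n)\<bar> \<le> sqrt \<rho>" and rho: "\<rho> < 1"
  shows "omega_min W \<le> 1/2"
proof (rule ccontr)
  assume "\<not> ?thesis"
  hence om: "omega_min W > 1/2" by simp
  have nn: "\<And>i j. 0 \<le> W$i$j" and sym: "\<And>i j. W$i$j = W$j$i" and rs: "\<And>i. (\<Sum>j\<in>UNIV. W$i$j) = 1"
    using ds unfolding doubly_stochastic_sym_def by auto
  have big: "W$i$j > 1/2" if "W$i$j > 0" for i j using omega_facts(2)[OF ds that] om by linarith
  have uniq: "j = k" if "W$i$j > 0" "W$i$k > 0" for i j k
  proof (rule ccontr)
    assume jk: "j \<noteq> k"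
    have "(\<Sum>l\<in>{j,k}. W$i$l) \<le> (\<Sum>l\<in>UNIV. W$i$l)"
      by (intro sum_mono2) (auto simp: nn)
    hence "W$i$j + W$i$k \<le> 1" using jk rs by simp
    thus False using big[OF that(1)] big[OF that(2)] by linarith
  qed
  have row: "\<exists>s. W$i$s = 1 \<and> (\<forall>k. k \<noteq> s \<longrightarrow> W$i$k = 0)" for i
  proof -
    have "\<exists>j. W$i$j > 0"
    proof (rule ccontr)
      assume "\<not> ?thesis"
      hence "\<forall>j. W$i$j \<le> 0" by (simp add: not_less)
      hence "(\<Sum>j\<in>UNIV. W$i$j) \<le> 0" by (simp add: sum_nonpos)
      thus False using rs by (metis not_one_le_zero)
    qed
    then obtain s where s: "W$i$s > 0" by blast
    have z: "W$i$k = 0" if "k \<noteq> s" for k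
      using uniq[OF s, of k] that nn[of i k] by force
    have "(\<Sum>k\<in>UNIV. W$i$k) = W$i$s"
      using z by (subst sum.remove[of UNIV s]) (auto intro: sum.neutral)
    thus ?thesis using rs z by auto
  qed
  have WW: "(\<Sum>k\<in>UNIV. W$i$k * W$k$j) = (if i = j then 1 else 0)" for i j
  proof -
    obtain s where s: "W$i$s = 1" "\<And>k. k \<noteq> s \<Longrightarrow> W$i$k = 0" using row[of i] by blast
    have "(\<Sum>k\<in>UNIV. W$i$k * W$k$j) = W$i$s * W$s$j"
      using s(2) by (subst sum.remove[of UNIV s]) (auto intro: sum.neutral)
    also have "\<dots> = W$s$j" using s by simp
    also have "\<dots> = (if i = j then 1 else 0)"
    proof -
      have si: "W$s$i = 1" using s sym by metis
      obtain s' where s': "W$s$s' = 1" "\<And>k. k \<noteq> s' \<Longrightarrow> W$s$k = 0" using row[of s] by blast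
      have "s' = i" using si s' by (metis zero_neq_one)
      thus ?thesis using s' si by auto
    qed
    finally show ?thesis .
  qed
  define p where "p = char_poly_mat W"
  define B where "B = (\<chi> i j. if i = j then [:W $ i $ j, 1:] else [:W $ i $ j:])"
  define r where "r = det B"
  define q :: "real poly" where "q = [:-1, 0, 1:] ^ CARD('n)"
  have pr: "p * r = q"
  proof -
    have "p * r = det ((\<chi> i j. if i = j then [:- (W $ i $ j), 1:] else [:- (W $ i $ j):]) ** B)"
      by (simp add: p_def r_def char_poly_mat_def det_mul)
    also have "\<dots> = det ((\<chi> i j. if i = j then [:-1, 0, 1:] else 0) :: real poly^'n^'n)"
    proof -
      have M: "(\<chi> i j. if i = j then [:- (W $ i $ j), 1:] else [:- (W $ i $ j):]) ** B = ((\<chi> i j. if i = j then [:-1, 0, 1:] else 0) :: real poly^'n^'n)"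
        unfolding B_def by (rule char_prod[OF WW])
      show ?thesis unfolding M ..
    qed
    also have "\<dots> = q" unfolding q_def by (subst det_diagonal) auto
    finally show ?thesis .
  qed
  have fac: "[:-1, 0, 1:] = [:-1, 1:] * [:1, 1::real:]" by simp
  have q0: "q \<noteq> 0" unfolding q_def by simp
  have pq: "proots q = repeat_mset CARD('n) ({#1#} + {#-1#})"
    unfolding q_def fac proots_power by (subst proots_mult) auto
  have p0: "p \<noteq> 0" and r0: "r \<noteq> 0" using pr q0 by auto
  have sz: "size (proots p) + size (proots r) = 2 * CARD('n)"
  proof -
    have "size (proots p) + size (proots r) = size (proots q)"
      using pr proots_mult[OF p0 r0] by simp
    thus ?thesis using pq by simp
  qed
  have dp: "degree p \<le> CARD('n)" unfolding p_def char_poly_mat_def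
    by (rule degree_det_le) auto
  have dr: "degree r \<le> CARD('n)" unfolding r_def B_def
    by (rule degree_det_le) auto
  have szp: "size (proots p) = CARD('n)"
    using sz size_proots_le[of p] size_proots_le[of r] dp dr by linarith
  have roots: "x = 1 \<or> x = -1" if "x \<in># proots p" for x
  proof -
    have "x \<in># proots q" using that pr proots_mult[OF p0 r0] by auto
    thus ?thesis using pq by (auto split: if_splits)
  qed
  define xs where "xs = rev (sorted_list_of_multiset (proots p))"
  have len: "length xs = CARD('n)"
    unfolding xs_def using szp by (metis length_rev mset_sorted_list_of_multiset size_mset)
  have "eig_k W CARD('n) = xs ! (CARD('n) - 1)" unfolding eig_k_def xs_def p_def ..
  moreover have "xs ! (CARD('n) - 1) \<in> set xs" using len by (intro nth_mem) simp
  moreover have "set xs = set_mset (proots p)" unfolding xs_def by simp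
  ultimately have "eig_k W CARD('n) \<in># proots p" by simp
  hence "\<bar>eig_k W CARD('n)\<bar> = 1" using roots by fastforce
  hence "1 \<le> sqrt \<rho>" using gap by linarith
  moreover have "sqrt \<rho> < 1" using rho by simp
  ultimately show False by linarith
qed

lemma ross_state_cong:
  assumes "\<And>a s. s \<le> n \<Longrightarrow> xi a s = xi' a s"
  shows "ross_state W gradF J Q \<gamma> \<alpha> x0 xi n = ross_state W gradF J Q \<gamma> \<alpha> x0 xi' n"
  using assms
proof (induction n)
  case 0 then show ?case by simp
next
  case (Suc n)
  have "ross_state W gradF J Q \<gamma> \<alpha> x0 xi n = ross_state W gradF J Q \<gamma> \<alpha> x0 xi' n"
    using Suc by auto
  moreover have "(\<lambda>a. xi a (Suc n)) = (\<lambda>a. xi' a (Suc n))" using Suc by auto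
  ultimately show ?case by simp
qed

context
  fixes Om :: "'w measure" and D :: "'n::finite \<Rightarrow> 's measure"
    and gradF :: "'v::euclidean_space \<Rightarrow> 's \<Rightarrow> 'v" and J :: "'s \<Rightarrow> 'v \<Rightarrow> real" and Q :: "'s set"
    and W :: "real^'n^'n" and \<gamma> :: real
    and x :: "'w \<Rightarrow> 'n \<Rightarrow> 'v" and z :: "'w \<Rightarrow> 'n \<Rightarrow> 's"
  assumes gradF_meas: "\<And>i. (\<lambda>p. gradF (fst p) (snd p)) \<in> borel_measurable (borel \<Otimes>\<^sub>M D i)"
    and J_meas: "\<And>q. q \<in> Q \<Longrightarrow> J q \<in> borel_measurable borel"
    and x_meas: "\<And>i. (\<lambda>\<omega>. x \<omega> i) \<in> borel_measurable Om"
    and z_meas: "\<And>a. (\<lambda>\<omega>. z \<omega> a) \<in> measurable Om (D a)"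
begin

lemma meas_sg: "(\<lambda>\<omega>. sg gradF (x \<omega>) (z \<omega>) j i) \<in> borel_measurable Om"
  unfolding sg_def using measurable_compose[OF measurable_Pair[OF x_meas[of i] z_meas[of j]] gradF_meas[of j]]
  by simp

lemma meas_coal: "(\<lambda>\<omega>. coal_val gradF J Q \<gamma> (x \<omega>) (z \<omega>) i S) \<in> borel_measurable Om"
proof (cases "S = {}")
  case True then show ?thesis by (simp add: coal_val_def)
next
  case False
  have inner: "(\<lambda>\<omega>. (1 / real (card S)) *\<^sub>R (\<Sum>j\<in>S. x \<omega> i - \<gamma> *\<^sub>R sg gradF (x \<omega>) (z \<omega>) j i)) \<in> borel_measurable Om"
    by (intro borel_measurable_scaleR borel_measurable_const borel_measurable_sum borel_measurable_diff x_meas meas_sg)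
  have "(\<lambda>\<omega>. (1 / real (card Q)) * (\<Sum>q\<in>Q. J q ((1 / real (card S)) *\<^sub>R (\<Sum>j\<in>S. x \<omega> i - \<gamma> *\<^sub>R sg gradF (x \<omega>) (z \<omega>) j i)))) \<in> borel_measurable Om"
    by (intro borel_measurable_times borel_measurable_const borel_measurable_sum measurable_compose[OF inner] J_meas)
  thus ?thesis using False by (simp add: coal_val_def)
qed

lemma meas_shapley: "(\<lambda>\<omega>. shapley W gradF J Q \<gamma> (x \<omega>) (z \<omega>) i j) \<in> borel_measurable Om"
  unfolding shapley_def
  by (intro borel_measurable_sum borel_measurable_divide borel_measurable_diff borel_measurable_const meas_coal)

lemma meas_shapley_norm: "(\<lambda>\<omega>. shapley_norm W gradF J Q \<gamma> (x \<omega>) (z \<omega>) i j) \<in> borel_measurable Om"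
  unfolding shapley_norm_def Let_def
  by (intro borel_measurable_divide borel_measurable_diff borel_measurable_Min borel_measurable_Max meas_shapley finite)

lemma meas_weight: "(\<lambda>\<omega>. ross_weight W gradF J Q \<gamma> (x \<omega>) (z \<omega>) i j) \<in> borel_measurable Om"
  unfolding ross_weight_def
  by (intro borel_measurable_divide borel_measurable_times borel_measurable_const borel_measurable_sum meas_shapley_norm)

lemma meas_gbar: "(\<lambda>\<omega>. ross_gbar W gradF J Q \<gamma> (x \<omega>) (z \<omega>) i) \<in> borel_measurable Om"
  unfolding ross_gbar_def
  by (intro borel_measurable_sum borel_measurable_scaleR meas_weight meas_sg)

end

lemma meas_state:
  fixes Om :: "'w measure" and D :: "'n::finite \<Rightarrow> 's measure"
    and gradF :: "'v::euclidean_space \<Rightarrow> 's \<Rightarrow> 'v" and J :: "'s \<Rightarrow> 'v \<Rightarrow> real" and Q :: "'s set"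
    and W :: "real^'n^'n" and xi :: "'n \<Rightarrow> nat \<Rightarrow> 'w \<Rightarrow> 's"
  assumes gradF_meas: "\<And>i. (\<lambda>p. gradF (fst p) (snd p)) \<in> borel_measurable (borel \<Otimes>\<^sub>M D i)"
    and J_meas: "\<And>q. q \<in> Q \<Longrightarrow> J q \<in> borel_measurable borel"
    and xi_meas: "\<And>a s. s \<le> n \<Longrightarrow> xi a s \<in> measurable Om (D a)"
  shows "(\<forall>i. (\<lambda>\<omega>. fst (ross_state W gradF J Q \<gamma> \<alpha> xst (\<lambda>a s. xi a s \<omega>) n) i) \<in> borel_measurable Om)
       \<and> (\<forall>i. (\<lambda>\<omega>. snd (ross_state W gradF J Q \<gamma> \<alpha> xst (\<lambda>a s. xi a s \<omega>) n) i) \<in> borel_measurable Om)"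
  using xi_meas
proof (induction n)
  case 0 then show ?case by simp
next
  case (Suc n)
  define X where "X \<omega> = fst (ross_state W gradF J Q \<gamma> \<alpha> xst (\<lambda>a s. xi a s \<omega>) n)" for \<omega>
  define U where "U \<omega> = snd (ross_state W gradF J Q \<gamma> \<alpha> xst (\<lambda>a s. xi a s \<omega>) n)" for \<omega>
  define Z where "Z \<omega> = (\<lambda>a. xi a (Suc n) \<omega>)" for \<omega>
  have IH: "\<And>i. (\<lambda>\<omega>. X \<omega> i) \<in> borel_measurable Om" "\<And>i. (\<lambda>\<omega>. U \<omega> i) \<in> borel_measurable Om"
    using Suc by (auto simp: X_def U_def)
  have Zm: "\<And>a. (\<lambda>\<omega>. Z \<omega> a) \<in> measurable Om (D a)"
    using Suc.prems[of "Suc n"] by (simp add: Z_def)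
  have gb: "\<And>i. (\<lambda>\<omega>. ross_gbar W gradF J Q \<gamma> (X \<omega>) (Z \<omega>) i) \<in> borel_measurable Om"
    by (rule meas_gbar[OF gradF_meas J_meas IH(1) Zm])
  have st: "ross_state W gradF J Q \<gamma> \<alpha> xst (\<lambda>a s. xi a s \<omega>) (Suc n) = ross_step W gradF J Q \<gamma> \<alpha> (X \<omega>, U \<omega>) (Z \<omega>)" for \<omega>
    by (simp add: X_def U_def Z_def)
  show ?case unfolding st ross_step_def Let_def fst_conv snd_conv
    by (intro conjI allI borel_measurable_sum borel_measurable_scaleR borel_measurable_const borel_measurable_diff borel_measurable_add IH gb)
qed

lemma noise_bound:
  fixes M :: "'w measure"
    and D :: "'n::finite \<Rightarrow> 's measure"
    and \<xi> :: "'n \<Rightarrow> nat \<Rightarrow> 'w \<Rightarrow> 's"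
    and gradF :: "'v::euclidean_space \<Rightarrow> 's \<Rightarrow> 'v"
    and gradf :: "'n \<Rightarrow> 'v \<Rightarrow> 'v"
    and W :: "real^'n^'n"
  assumes M_prob: "prob_space M"
    and samples_rv: "\<And>i s. \<xi> i s \<in> measurable M (D i)"
    and samples_distr: "\<And>i s. distr M (D i) (\<xi> i s) = D i"
    and samples_indep: "prob_space.indep_vars M (\<lambda>p. D (fst p)) (\<lambda>p. \<xi> (fst p) (snd p)) UNIV"
    and J_meas: "\<And>q. q \<in> Q \<Longrightarrow> J q \<in> borel_measurable borel"
    and gradF_meas: "\<And>i. (\<lambda>p. gradF (fst p) (snd p)) \<in> borel_measurable (borel \<Otimes>\<^sub>M D i)"
    and gf_meas: "\<And>j. gradf j \<in> borel_measurable borel"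
    and A2_var: "\<And>i x. (\<integral>\<^sup>+ s. ennreal ((norm (gradF x s - gradf i x))\<^sup>2) \<partial>D i) \<le> ennreal (\<sigma>\<^sup>2)"
    and t_pos: "t \<ge> 1"
  shows "(\<integral>\<^sup>+ \<omega>. ennreal ((norm (gradF (fst (ross_state W gradF J Q \<gamma> \<alpha> x0 (\<lambda>a s. \<xi> a s \<omega>) (t - 1)) i) (\<xi> j t \<omega>)
            - gradf j (fst (ross_state W gradF J Q \<gamma> \<alpha> x0 (\<lambda>a s. \<xi> a s \<omega>) (t - 1)) i)))\<^sup>2) \<partial>M) \<le> ennreal (\<sigma>\<^sup>2)"
proof -
  interpret prob_space M by (rule M_prob)
  define I :: "('n \<times> nat) set" where "I = UNIV \<times> {..t}"
  define Dp where "Dp p = D (fst p)" for p :: "'n \<times> nat"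
  have finI: "finite I" unfolding I_def by simp
  have probD: "prob_space (D a)" for a
    using prob_space_distr[OF samples_rv[of a 0]] samples_distr[of a 0] by simp
  have rv: "random_variable (Dp p) (\<xi> (fst p) (snd p))" for p
    unfolding Dp_def by (rule samples_rv)
  have ind: "indep_vars Dp (\<lambda>p. \<xi> (fst p) (snd p)) I"
    using samples_indep unfolding Dp_def by (rule indep_vars_subset) simp
  define Y where "Y \<omega> = (\<lambda>p\<in>I. \<xi> (fst p) (snd p) \<omega>)" for \<omega>
  have distrY: "distr M (PiM I Dp) Y = PiM I Dp"
  proof -
    have "distr M (PiM I Dp) Y = PiM I (\<lambda>p. distr M (Dp p) (\<xi> (fst p) (snd p)))"
      using indep_vars_iff_distr_eq_PiM[where I=I and M'=Dp and X="\<lambda>p. \<xi> (fst p) (snd p)"] ind rv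
      unfolding Y_def I_def by auto
    also have "\<dots> = PiM I Dp"
      by (intro PiM_cong) (auto simp: Dp_def samples_distr)
    finally show ?thesis .
  qed
  have Ym: "Y \<in> measurable M (PiM I Dp)"
    unfolding Y_def by (intro measurable_restrict) (simp add: Dp_def samples_rv)
  define G where "G y = fst (ross_state W gradF J Q \<gamma> \<alpha> x0 (\<lambda>a s. y (a, s)) (t - 1)) i" for y :: "'n \<times> nat \<Rightarrow> 's"
  have Gm: "G \<in> borel_measurable (PiM I Dp)"
  proof -
    have "(\<lambda>y. y (a, s)) \<in> measurable (PiM I Dp) (D a)" if "s \<le> t - 1" for a s
    proof -
      have "(a, s) \<in> I" using that unfolding I_def by simp
      from measurable_component_singleton[OF this, of Dp] show ?thesis by (simp add: Dp_def)
    qed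
    from meas_state[where gradF=gradF and D=D and J=J and Q=Q and n="t - 1" and xi="\<lambda>a s y. y (a, s)" and Om="PiM I Dp" and W=W and \<gamma>=\<gamma> and \<alpha>=\<alpha> and xst=x0, OF gradF_meas J_meas this]
    show ?thesis unfolding G_def by simp
  qed
  have jt: "(j, t) \<in> I" unfolding I_def by simp
  define h where "h y = ennreal ((norm (gradF (G y) (y (j, t)) - gradf j (G y)))\<^sup>2)" for y
  have hm: "h \<in> borel_measurable (PiM I Dp)"
  proof -
    have c: "(\<lambda>y. y (j, t)) \<in> measurable (PiM I Dp) (D j)"
      using measurable_component_singleton[OF jt, of Dp] by (simp add: Dp_def)
    have g1: "(\<lambda>y. gradF (G y) (y (j, t))) \<in> borel_measurable (PiM I Dp)"
      using measurable_compose[OF measurable_Pair[OF Gm c] gradF_meas[of j]] by simp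
    have g2: "(\<lambda>y. gradf j (G y)) \<in> borel_measurable (PiM I Dp)"
      using measurable_compose[OF Gm gf_meas[of j]] .
    show ?thesis unfolding h_def
      by (intro measurable_compose[OF _ measurable_ennreal] borel_measurable_power measurable_compose[OF _ borel_measurable_norm] borel_measurable_diff g1 g2)
  qed
  have GY: "G (Y \<omega>) = fst (ross_state W gradF J Q \<gamma> \<alpha> x0 (\<lambda>a s. \<xi> a s \<omega>) (t - 1)) i" for \<omega>
    unfolding G_def by (subst ross_state_cong[where xi' = "\<lambda>a s. \<xi> a s \<omega>"]) (auto simp: Y_def I_def)
  have YJ: "Y \<omega> (j, t) = \<xi> j t \<omega>" for \<omega> using jt by (simp add: Y_def)
  have "(\<integral>\<^sup>+ \<omega>. ennreal ((norm (gradF (fst (ross_state W gradF J Q \<gamma> \<alpha> x0 (\<lambda>a s. \<xi> a s \<omega>) (t - 1)) i) (\<xi> j t \<omega>)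
            - gradf j (fst (ross_state W gradF J Q \<gamma> \<alpha> x0 (\<lambda>a s. \<xi> a s \<omega>) (t - 1)) i)))\<^sup>2) \<partial>M)
      = (\<integral>\<^sup>+ \<omega>. h (Y \<omega>) \<partial>M)"
    by (simp add: h_def GY YJ)
  also have "\<dots> = (\<integral>\<^sup>+ y. h y \<partial>distr M (PiM I Dp) Y)"
    using Ym hm by (subst nn_integral_distr) auto
  also have "\<dots> = (\<integral>\<^sup>+ y. h y \<partial>PiM I Dp)" by (simp add: distrY)
  also have "\<dots> = (\<integral>\<^sup>+ x. (\<integral>\<^sup>+ z. h (x((j, t) := z)) \<partial>Dp (j, t)) \<partial>PiM (I - {(j, t)}) Dp)"
  proof -
    interpret ps: product_sigma_finite Dp
      by (rule product_sigma_finite.intro) (simp add: Dp_def prob_space_imp_sigma_finite probD)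
    have Ieq: "I = insert (j, t) (I - {(j, t)})" using jt by auto
    show ?thesis
      using ps.product_nn_integral_insert[of "I - {(j, t)}" "(j, t)" h] finI hm Ieq by simp
  qed
  also have "\<dots> \<le> (\<integral>\<^sup>+ x. ennreal (\<sigma>\<^sup>2) \<partial>PiM (I - {(j, t)}) Dp)"
  proof (intro nn_integral_mono)
    fix x :: "'n \<times> nat \<Rightarrow> 's"
    have Gx: "G (x((j, t) := z)) = G x" for z
      unfolding G_def by (subst ross_state_cong[where xi' = "\<lambda>a s. x (a, s)"]) (use t_pos in auto)
    have "(\<integral>\<^sup>+ z. h (x((j, t) := z)) \<partial>Dp (j, t)) = (\<integral>\<^sup>+ z. ennreal ((norm (gradF (G x) z - gradf j (G x)))\<^sup>2) \<partial>D j)"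
      by (simp add: h_def Gx Dp_def)
    also have "\<dots> \<le> ennreal (\<sigma>\<^sup>2)" by (rule A2_var)
    finally show "(\<integral>\<^sup>+ z. h (x((j, t) := z)) \<partial>Dp (j, t)) \<le> ennreal (\<sigma>\<^sup>2)" .
  qed
  also have "\<dots> = ennreal (\<sigma>\<^sup>2)"
  proof -
    interpret pp: prob_space "PiM (I - {(j, t)}) Dp"
      by (rule prob_space_PiM) (simp add: Dp_def probD)
    show ?thesis by (simp add: pp.emeasure_space_1)
  qed
  finally show ?thesis .
qed

lemma wlemma:
  fixes a w :: "'n \<Rightarrow> real"
  assumes fin: "finite A" and a0: "\<And>k. k \<in> A \<Longrightarrow> a k \<ge> 0" and BA: "B \<subseteq> A"
    and wb: "\<And>j. j \<in> B \<Longrightarrow> w j \<ge> om" and om0: "om > 0"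
  shows "\<And>j. j \<in> B \<Longrightarrow> 0 \<le> a j / (w j * (\<Sum>k\<in>A. a k))"
    and "\<And>j. j \<in> B \<Longrightarrow> a j / (w j * (\<Sum>k\<in>A. a k)) \<le> 1 / om"
    and "(\<Sum>j\<in>B. a j / (w j * (\<Sum>k\<in>A. a k))) \<le> 1 / om"
proof -
  define S where "S = (\<Sum>k\<in>A. a k)"
  have S0: "S \<ge> 0" unfolding S_def using a0 by (simp add: sum_nonneg)
  have aS: "a j \<le> S" if "j \<in> A" for j unfolding S_def using fin a0 that by (intro member_le_sum) auto
  have wpos: "w j > 0" if "j \<in> B" for j using wb[OF that] om0 by linarith
  have bnd: "a j / (w j * S) \<le> a j / (om * S)" if "j \<in> B" for j
  proof (cases "S = 0")
    case True then show ?thesis by simp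
  next
    case False
    hence "S > 0" using S0 by simp
    thus ?thesis using a0[of j] that BA wb[OF that] om0
      by (intro divide_left_mono) (auto intro: mult_right_mono)
  qed
  show "0 \<le> a j / (w j * (\<Sum>k\<in>A. a k))" if j: "j \<in> B" for j
  proof -
    have "0 \<le> a j" using a0 BA j by auto
    moreover have "0 \<le> w j * S" using wpos[OF j] S0 by simp
    ultimately show ?thesis unfolding S_def by simp
  qed
  show "\<And>j. j \<in> B \<Longrightarrow> a j / (w j * (\<Sum>k\<in>A. a k)) \<le> 1 / om"
  proof -
    fix j assume j: "j \<in> B"
    have "a j / (om * S) \<le> 1 / om"
    proof (cases "S = 0")
      case True then show ?thesis using om0 by simp
    next
      case False
      hence "S > 0" using S0 by simp
      hence "a j / (om * S) \<le> S / (om * S)" using om0 aS[of j] j BA by (intro divide_right_mono) auto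
      also have "\<dots> = 1 / om" using \<open>S > 0\<close> by simp
      finally show ?thesis .
    qed
    thus "a j / (w j * (\<Sum>k\<in>A. a k)) \<le> 1 / om" using bnd[OF j] unfolding S_def by linarith
  qed
  have "(\<Sum>j\<in>B. a j / (w j * S)) \<le> (\<Sum>j\<in>B. a j / (om * S))" by (intro sum_mono bnd)
  also have "\<dots> = (\<Sum>j\<in>B. a j) / (om * S)" by (simp add: sum_divide_distrib)
  also have "\<dots> \<le> 1 / om"
  proof (cases "S = 0")
    case True then show ?thesis using om0 by simp
  next
    case False
    hence Sp: "S > 0" using S0 by simp
    have "(\<Sum>j\<in>B. a j) \<le> S" unfolding S_def using fin BA a0 by (intro sum_mono2) auto
    hence "(\<Sum>j\<in>B. a j) / (om * S) \<le> S / (om * S)" using om0 Sp by (intro divide_right_mono) auto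
    also have "\<dots> = 1 / om" using Sp by simp
    finally show ?thesis .
  qed
  finally show "(\<Sum>j\<in>B. a j / (w j * (\<Sum>k\<in>A. a k))) \<le> 1 / om" unfolding S_def .
qed

lemma shapley_norm_nonneg:
  assumes "k \<in> nbhd W i"
  shows "shapley_norm W gradF J Q \<gamma> x xi i k \<ge> 0"
proof -
  define \<phi> where "\<phi> = shapley W gradF J Q \<gamma> x xi i"
  have fin: "finite ((\<lambda>k. \<phi> k) ` nbhd W i)" by simp
  have ne: "(\<lambda>k. \<phi> k) ` nbhd W i \<noteq> {}" using assms by auto
  have "Min (\<phi> ` nbhd W i) \<le> \<phi> k" using assms fin by (intro Min_le) auto
  moreover have "\<phi> k \<le> Max (\<phi> ` nbhd W i)" using assms fin by (intro Max_ge) auto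
  ultimately show ?thesis unfolding shapley_norm_def Let_def \<phi>_def[symmetric]
    by (intro divide_nonneg_nonneg) auto
qed

theorem lemma1:
  fixes M :: "'w measure"
    and D :: "'n::finite \<Rightarrow> 's measure"
    and \<xi> :: "'n \<Rightarrow> nat \<Rightarrow> 'w \<Rightarrow> 's"
    and F :: "'v::euclidean_space \<Rightarrow> 's \<Rightarrow> real"
    and gradF :: "'v \<Rightarrow> 's \<Rightarrow> 'v"
    and gradf :: "'n \<Rightarrow> 'v \<Rightarrow> 'v"
    and J :: "'s \<Rightarrow> 'v \<Rightarrow> real"
    and Q :: "'s set"
    and W :: "real^'n^'n"
    and \<gamma> \<alpha> L \<sigma> \<zeta> \<rho> :: real
    and x0 :: 'v
    and t :: nat
  assumes W_ds: "doubly_stochastic_sym W"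
    and M_prob: "prob_space M"
    and samples_rv: "\<And>i s. \<xi> i s \<in> measurable M (D i)"
    and samples_distr: "\<And>i s. distr M (D i) (\<xi> i s) = D i"
    and samples_indep: "prob_space.indep_vars M (\<lambda>p. D (fst p)) (\<lambda>p. \<xi> (fst p) (snd p)) UNIV"
    and Q_fin: "finite Q" and Q_ne: "Q \<noteq> {}"
    and J_meas: "\<And>q. q \<in> Q \<Longrightarrow> J q \<in> borel_measurable borel"
    and gradF_meas: "\<And>i. (\<lambda>p. gradF (fst p) (snd p)) \<in> borel_measurable (borel \<Otimes>\<^sub>M D i)"
    and F_grad: "\<And>x s. GDERIV (\<lambda>y. F y s) x :> gradF x s"
    and F_int: "\<And>i x. integrable (D i) (\<lambda>s. F x s)"
    and f_grad: "\<And>i x. GDERIV (\<lambda>y. \<integral>s. F y s \<partial>D i) x :> gradf i x"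
    and f_grad_unbiased: "\<And>i x. gradf i x = (\<integral>s. gradF x s \<partial>D i)"
    and A1: "\<And>i x y. norm (gradf i x - gradf i y) \<le> L * norm (x - y)"
    and A2_pos: "\<sigma> > 0" "\<zeta> > 0"
    and A2_var: "\<And>i x. (\<integral>\<^sup>+ s. ennreal ((norm (gradF x s - gradf i x))\<^sup>2) \<partial>D i) \<le> ennreal (\<sigma>\<^sup>2)"
    and A2_het: "\<And>i x. (norm (gradf i x - (1 / real CARD('n)) *\<^sub>R (\<Sum>k\<in>UNIV. gradf k x)))\<^sup>2 \<le> \<zeta>\<^sup>2"
    and A3_top: "eig_k W 1 = 1"
    and A3_gap: "max \<bar>eig_k W 2\<bar> \<bar>eig_k W CARD('n)\<bar> \<le> sqrt \<rho>"
    and A3_rho: "\<rho> < 1"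
    and gamma_pos: "\<gamma> > 0"
    and t_pos: "t \<ge> 1"
  shows "(\<integral>\<^sup>+ \<omega>. ennreal ((norm ((1 / real CARD('n)) *\<^sub>R
              (\<Sum>i\<in>UNIV.
                 ross_gbar W gradF J Q \<gamma>
                   (fst (ross_state W gradF J Q \<gamma> \<alpha> x0 (\<lambda>a s. \<xi> a s \<omega>) (t - 1)))
                   (\<lambda>a. \<xi> a t \<omega>) i
               - sg gradF (fst (ross_state W gradF J Q \<gamma> \<alpha> x0 (\<lambda>a s. \<xi> a s \<omega>) (t - 1)))
                   (\<lambda>a. \<xi> a t \<omega>) i i)))\<^sup>2) \<partial>M)
     \<le> ennreal (2 * \<sigma>\<^sup>2 / omega_min W ^ 4 + 2 * \<sigma>\<^sup>2 / real CARD('n) + 8 * \<zeta>\<^sup>2 / omega_min W ^ 4)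
       + ennreal (16 * L\<^sup>2 / (real CARD('n) * omega_min W ^ 4)) *
           (\<Sum>i\<in>UNIV. \<integral>\<^sup>+ \<omega>. ennreal ((norm (
               fst (ross_state W gradF J Q \<gamma> \<alpha> x0 (\<lambda>a s. \<xi> a s \<omega>) (t - 1)) i
               - (1 / real CARD('n)) *\<^sub>R
                   (\<Sum>k\<in>UNIV. fst (ross_state W gradF J Q \<gamma> \<alpha> x0 (\<lambda>a s. \<xi> a s \<omega>) (t - 1)) k)))\<^sup>2) \<partial>M)
       + ennreal (8 / omega_min W ^ 4 + 2) *
           (\<integral>\<^sup>+ \<omega>. ennreal ((norm ((1 / real CARD('n)) *\<^sub>R
               (\<Sum>i\<in>UNIV. gradf i (fst (ross_state W gradF J Q \<gamma> \<alpha> x0 (\<lambda>a s. \<xi> a s \<omega>) (t - 1)) i))))\<^sup>2) \<partial>M)"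
proof -
  interpret prob_space M by (rule M_prob)
  define om where "om = omega_min W"
  have om0: "om > 0" unfolding om_def by (rule omega_facts(1)[OF W_ds])
  have omW: "\<And>i j. W$i$j > 0 \<Longrightarrow> om \<le> W$i$j" unfolding om_def by (rule omega_facts(2)[OF W_ds])
  have omh: "om \<le> 1/2" unfolding om_def by (rule omega_le_half[OF W_ds A3_gap A3_rho])
  define u where "u = 1 / om"
  have u2: "u \<ge> 2" unfolding u_def using om0 omh by (simp add: field_simps)
  have Wnn: "\<And>i j. 0 \<le> W$i$j" and Wrs: "\<And>i. (\<Sum>j\<in>UNIV. W$i$j) = 1"
    using W_ds unfolding doubly_stochastic_sym_def by auto
  have L0: "L \<ge> 0"
  proof -
    obtain b :: 'v where b: "b \<in> Basis" using nonempty_Basis by blast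
    have bn: "norm b > 0" using nonzero_Basis[OF b] by simp
    obtain i0 :: 'n where True by simp
    have "0 \<le> L * norm (b - 0)" using A1[of i0 b 0] norm_ge_zero[of "gradf i0 b - gradf i0 0"] by linarith
    thus ?thesis using bn by (simp add: zero_le_mult_iff)
  qed
  have z0: "\<zeta> \<ge> 0" using A2_pos by simp
  have het: "\<And>i y. norm (gradf i y - (1 / real CARD('n)) *\<^sub>R (\<Sum>k\<in>UNIV. gradf k y)) \<le> \<zeta>"
    using A2_het z0 by (rule power2_le_imp_le)
  have gf_meas: "\<And>j. gradf j \<in> borel_measurable borel"
  proof -
    fix j
    have "L-lipschitz_on UNIV (gradf j)" by (intro lipschitz_onI) (auto simp: dist_norm A1 L0)
    hence "continuous_on UNIV (gradf j)" by (rule lipschitz_on_continuous_on)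
    thus "gradf j \<in> borel_measurable borel" by (rule borel_measurable_continuous_onI)
  qed
  define X where "X \<omega> = fst (ross_state W gradF J Q \<gamma> \<alpha> x0 (\<lambda>a s. \<xi> a s \<omega>) (t - 1))" for \<omega>
  have sr: "\<And>a s. s \<le> t - 1 \<Longrightarrow> \<xi> a s \<in> measurable M (D a)" using samples_rv by blast
  have Xm: "\<And>i. (\<lambda>\<omega>. X \<omega> i) \<in> borel_measurable M"
    using meas_state[where gradF=gradF and D=D and J=J and Q=Q and n="t - 1" and xi=\<xi> and Om=M and W=W and \<gamma>=\<gamma> and \<alpha>=\<alpha> and xst=x0, OF gradF_meas J_meas sr]
    unfolding X_def by simp
  define K where "K i = {j. 0 < W$i$j}" for i
  define Z where "Z \<omega> = (\<lambda>a. \<xi> a t \<omega>)" for \<omega>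
  define p where "p \<omega> i j = (if j \<in> K i then ross_weight W gradF J Q \<gamma> (X \<omega>) (Z \<omega>) i j else 0)" for \<omega> i j
  have pprops: "p \<omega> i j \<ge> 0 \<and> p \<omega> i j \<le> u \<and> (\<Sum>j\<in>K i. p \<omega> i j) \<le> u" for \<omega> i j
  proof -
    define a where "a k = shapley_norm W gradF J Q \<gamma> (X \<omega>) (Z \<omega>) i k" for k
    have rw: "ross_weight W gradF J Q \<gamma> (X \<omega>) (Z \<omega>) i j = a j / (W$i$j * (\<Sum>k\<in>nbhd W i. a k))" for j
      by (simp add: ross_weight_def a_def)
    have KN: "K i \<subseteq> nbhd W i" by (auto simp: K_def nbhd_def)
    note wl = wlemma[where A="nbhd W i" and a=a and B="K i" and w="\<lambda>j. W$i$j" and om=om, OF _ _ KN _ om0]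
    have a0: "\<And>k. k \<in> nbhd W i \<Longrightarrow> a k \<ge> 0" unfolding a_def by (rule shapley_norm_nonneg)
    have fin: "finite (nbhd W i)" by simp
    have wK: "\<And>j. j \<in> K i \<Longrightarrow> om \<le> W$i$j" using omW by (simp add: K_def)
    note wl' = wl[OF fin a0 wK]
    have s1: "p \<omega> i j \<ge> 0" using wl'(1)[of j] by (simp add: p_def rw)
    have s2: "p \<omega> i j \<le> u" using wl'(2)[of j] u2 om0 by (auto simp: p_def rw u_def)
    have "(\<Sum>j\<in>K i. p \<omega> i j) = (\<Sum>j\<in>K i. a j / (W$i$j * (\<Sum>k\<in>nbhd W i. a k)))"
      by (intro sum.cong) (auto simp: p_def rw)
    hence s3: "(\<Sum>j\<in>K i. p \<omega> i j) \<le> u" using wl'(3) by (simp add: u_def)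
    show ?thesis using s1 s2 s3 by blast
  qed
  have gbar_eq: "ross_gbar W gradF J Q \<gamma> (X \<omega>) (Z \<omega>) i = (\<Sum>j\<in>K i. p \<omega> i j *\<^sub>R gradF (X \<omega> i) (\<xi> j t \<omega>))" for \<omega> i
  proof -
    have "ross_gbar W gradF J Q \<gamma> (X \<omega>) (Z \<omega>) i
        = (\<Sum>j\<in>nbhd W i. ross_weight W gradF J Q \<gamma> (X \<omega>) (Z \<omega>) i j *\<^sub>R sg gradF (X \<omega>) (Z \<omega>) j i)"
      by (simp add: ross_gbar_def)
    also have "\<dots> = (\<Sum>j\<in>K i. ross_weight W gradF J Q \<gamma> (X \<omega>) (Z \<omega>) i j *\<^sub>R sg gradF (X \<omega>) (Z \<omega>) j i)"
    proof (rule sum.mono_neutral_right)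
      show "finite (nbhd W i)" by simp
      show "K i \<subseteq> nbhd W i" by (auto simp: K_def nbhd_def)
      show "\<forall>j\<in>nbhd W i - K i. ross_weight W gradF J Q \<gamma> (X \<omega>) (Z \<omega>) i j *\<^sub>R sg gradF (X \<omega>) (Z \<omega>) j i = 0"
      proof
        fix j assume j: "j \<in> nbhd W i - K i"
        hence "W$i$j = 0" using Wnn[of i j] by (auto simp: K_def nbhd_def)
        thus "ross_weight W gradF J Q \<gamma> (X \<omega>) (Z \<omega>) i j *\<^sub>R sg gradF (X \<omega>) (Z \<omega>) j i = 0"
          by (simp add: ross_weight_def)
      qed
    qed
    also have "\<dots> = (\<Sum>j\<in>K i. p \<omega> i j *\<^sub>R gradF (X \<omega> i) (\<xi> j t \<omega>))"
      by (intro sum.cong) (auto simp: p_def sg_def Z_def)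
    finally show ?thesis .
  qed
  have sg_eq: "sg gradF (X \<omega>) (Z \<omega>) i i = gradF (X \<omega> i) (\<xi> i t \<omega>)" for \<omega> i
    by (simp add: sg_def Z_def)
  define n2 where "n2 \<omega> i j = (norm (gradF (X \<omega> i) (\<xi> j t \<omega>) - gradf j (X \<omega> i)))\<^sup>2" for \<omega> i j
  define Rs where "Rs \<omega> = 3 * u\<^sup>2 / real CARD('n) * (\<Sum>i\<in>UNIV. \<Sum>j\<in>K i. n2 \<omega> i j) + 6 / real CARD('n) * (\<Sum>i\<in>UNIV. n2 \<omega> i i)" for \<omega>
  define D2 where "D2 \<omega> i = (norm (X \<omega> i - (1 / real CARD('n)) *\<^sub>R (\<Sum>k\<in>UNIV. X \<omega> k)))\<^sup>2" for \<omega> i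
  define P2 where "P2 \<omega> = (norm ((1 / real CARD('n)) *\<^sub>R (\<Sum>i\<in>UNIV. gradf i (X \<omega> i))))\<^sup>2" for \<omega>
  define c3 where "c3 = 8 / om ^ 4 + 2"
  define c4 where "c4 = 16 * L\<^sup>2 / (real CARD('n) * om ^ 4)"
  define c5 where "c5 = 8 * \<zeta>\<^sup>2 / om ^ 4"
  have cc: "8 * \<zeta>\<^sup>2 * u ^ 4 = c5" "16 * L\<^sup>2 * u ^ 4 / real CARD('n) = c4" "8 * u ^ 4 + 2 = c3"
    unfolding c3_def c4_def c5_def u_def by (simp_all add: power_one_over)
  have pw: "(norm ((1 / real CARD('n)) *\<^sub>R (\<Sum>i\<in>UNIV. ross_gbar W gradF J Q \<gamma> (X \<omega>) (Z \<omega>) i - sg gradF (X \<omega>) (Z \<omega>) i i)))\<^sup>2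
      \<le> Rs \<omega> + c5 + c4 * (\<Sum>i\<in>UNIV. D2 \<omega> i) + c3 * P2 \<omega>" for \<omega>
  proof -
    have e1: "(\<Sum>i\<in>UNIV. ross_gbar W gradF J Q \<gamma> (X \<omega>) (Z \<omega>) i - sg gradF (X \<omega>) (Z \<omega>) i i)
       = (\<Sum>i\<in>UNIV. (\<Sum>j\<in>K i. p \<omega> i j *\<^sub>R gradF (X \<omega> i) (\<xi> j t \<omega>)) - gradF (X \<omega> i) (\<xi> i t \<omega>))"
      by (simp add: gbar_eq sg_eq)
    note inst = pointwise[where x="X \<omega>" and g="\<lambda>j i. gradF (X \<omega> i) (\<xi> j t \<omega>)" and gf=gradf and p="p \<omega>" and Nb=K
        and u=u and L=L and \<zeta>=\<zeta>, OF u2 L0 z0 _ _ _ het A1]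
    have "(norm ((1 / real CARD('n)) *\<^sub>R (\<Sum>i\<in>UNIV. (\<Sum>j\<in>K i. p \<omega> i j *\<^sub>R gradF (X \<omega> i) (\<xi> j t \<omega>)) - gradF (X \<omega> i) (\<xi> i t \<omega>))))\<^sup>2
      \<le> Rs \<omega> + c5 + c4 * (\<Sum>i\<in>UNIV. D2 \<omega> i) + c3 * P2 \<omega>"
      using inst[unfolded cc] pprops unfolding Rs_def n2_def D2_def P2_def by (simp add: ac_simps)
    thus ?thesis unfolding e1 .
  qed
  have m_n2: "(\<lambda>\<omega>. n2 \<omega> i j) \<in> borel_measurable M" for i j
  proof -
    have g1: "(\<lambda>\<omega>. gradF (X \<omega> i) (\<xi> j t \<omega>)) \<in> borel_measurable M"
      using measurable_compose[OF measurable_Pair[OF Xm[of i] samples_rv[of j t]] gradF_meas[of j]] by simp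
    have g2: "(\<lambda>\<omega>. gradf j (X \<omega> i)) \<in> borel_measurable M" using measurable_compose[OF Xm[of i] gf_meas[of j]] .
    show ?thesis unfolding n2_def
      by (intro borel_measurable_power measurable_compose[OF _ borel_measurable_norm] borel_measurable_diff g1 g2)
  qed
  have m_Rs: "(\<lambda>\<omega>. Rs \<omega>) \<in> borel_measurable M" unfolding Rs_def
    by (intro borel_measurable_add borel_measurable_times borel_measurable_const borel_measurable_sum m_n2)
  have m_D2: "(\<lambda>\<omega>. D2 \<omega> i) \<in> borel_measurable M" for i unfolding D2_def
    by (intro borel_measurable_power measurable_compose[OF _ borel_measurable_norm] borel_measurable_diff
        borel_measurable_scaleR borel_measurable_const borel_measurable_sum Xm)
  have m_P2: "(\<lambda>\<omega>. P2 \<omega>) \<in> borel_measurable M" unfolding P2_def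
    by (intro borel_measurable_power measurable_compose[OF _ borel_measurable_norm]
        borel_measurable_scaleR borel_measurable_const borel_measurable_sum measurable_compose[OF Xm gf_meas])
  have mA[measurable]: "(\<lambda>\<omega>. ennreal (Rs \<omega>)) \<in> borel_measurable M"
    using measurable_compose[OF m_Rs measurable_ennreal] .
  have mD[measurable]: "(\<lambda>\<omega>. ennreal (D2 \<omega> i)) \<in> borel_measurable M" for i
    using measurable_compose[OF m_D2 measurable_ennreal] .
  have mP[measurable]: "(\<lambda>\<omega>. ennreal (P2 \<omega>)) \<in> borel_measurable M"
    using measurable_compose[OF m_P2 measurable_ennreal] .
  have mN[measurable]: "(\<lambda>\<omega>. ennreal (n2 \<omega> i j)) \<in> borel_measurable M" for i j
    using measurable_compose[OF m_n2 measurable_ennreal] .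
  have n20: "n2 \<omega> i j \<ge> 0" for \<omega> i j by (simp add: n2_def)
  have Rs0: "Rs \<omega> \<ge> 0" for \<omega> unfolding Rs_def using n20 by (intro add_nonneg_nonneg mult_nonneg_nonneg sum_nonneg) auto
  have c0: "c3 \<ge> 0" "c4 \<ge> 0" "c5 \<ge> 0" unfolding c3_def c4_def c5_def using om0 by auto
  have D20: "D2 \<omega> i \<ge> 0" "P2 \<omega> \<ge> 0" for \<omega> i by (simp_all add: D2_def P2_def)
  have ennr: "ennreal (Rs \<omega> + c5 + c4 * (\<Sum>i\<in>UNIV. D2 \<omega> i) + c3 * P2 \<omega>)
     = ennreal (Rs \<omega>) + ennreal c5 + ennreal c4 * (\<Sum>i\<in>UNIV. ennreal (D2 \<omega> i)) + ennreal c3 * ennreal (P2 \<omega>)" for \<omega>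
  proof -
    have S0: "(\<Sum>i\<in>UNIV. D2 \<omega> i) \<ge> 0" by (simp add: sum_nonneg D20)
    have a1: "0 \<le> c4 * (\<Sum>i\<in>UNIV. D2 \<omega> i)" "0 \<le> c3 * P2 \<omega>" using c0 S0 D20 by simp_all
    have "ennreal (Rs \<omega> + c5 + c4 * (\<Sum>i\<in>UNIV. D2 \<omega> i) + c3 * P2 \<omega>)
       = ennreal (Rs \<omega>) + ennreal c5 + ennreal (c4 * (\<Sum>i\<in>UNIV. D2 \<omega> i)) + ennreal (c3 * P2 \<omega>)"
      using Rs0[of \<omega>] c0 a1 by (simp only: ennreal_plus add_nonneg_nonneg)
    also have "ennreal (c4 * (\<Sum>i\<in>UNIV. D2 \<omega> i)) = ennreal c4 * (\<Sum>i\<in>UNIV. ennreal (D2 \<omega> i))"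
      using c0 S0 D20 by (simp add: ennreal_mult)
    also have "ennreal (c3 * P2 \<omega>) = ennreal c3 * ennreal (P2 \<omega>)"
      using c0 D20 by (simp add: ennreal_mult)
    finally show ?thesis .
  qed
  have step1: "(\<integral>\<^sup>+ \<omega>. ennreal ((norm ((1 / real CARD('n)) *\<^sub>R (\<Sum>i\<in>UNIV. ross_gbar W gradF J Q \<gamma> (X \<omega>) (Z \<omega>) i - sg gradF (X \<omega>) (Z \<omega>) i i)))\<^sup>2) \<partial>M)
     \<le> (\<integral>\<^sup>+ \<omega>. ennreal (Rs \<omega>) + ennreal c5 + ennreal c4 * (\<Sum>i\<in>UNIV. ennreal (D2 \<omega> i)) + ennreal c3 * ennreal (P2 \<omega>) \<partial>M)"
  proof (intro nn_integral_mono)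
    fix \<omega>
    from ennreal_leI[OF pw[of \<omega>]]
    show "ennreal ((norm ((1 / real CARD('n)) *\<^sub>R (\<Sum>i\<in>UNIV. ross_gbar W gradF J Q \<gamma> (X \<omega>) (Z \<omega>) i - sg gradF (X \<omega>) (Z \<omega>) i i)))\<^sup>2)
      \<le> ennreal (Rs \<omega>) + ennreal c5 + ennreal c4 * (\<Sum>i\<in>UNIV. ennreal (D2 \<omega> i)) + ennreal c3 * ennreal (P2 \<omega>)"
      by (simp only: ennr)
  qed
  have step2: "(\<integral>\<^sup>+ \<omega>. ennreal (Rs \<omega>) + ennreal c5 + ennreal c4 * (\<Sum>i\<in>UNIV. ennreal (D2 \<omega> i)) + ennreal c3 * ennreal (P2 \<omega>) \<partial>M)
     = (\<integral>\<^sup>+ \<omega>. ennreal (Rs \<omega>) \<partial>M) + ennreal c5 + ennreal c4 * (\<Sum>i\<in>UNIV. \<integral>\<^sup>+ \<omega>. ennreal (D2 \<omega> i) \<partial>M)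
       + ennreal c3 * (\<integral>\<^sup>+ \<omega>. ennreal (P2 \<omega>) \<partial>M)"
  proof -
    have i1: "(\<integral>\<^sup>+ \<omega>. ennreal (Rs \<omega>) + ennreal c5 + ennreal c4 * (\<Sum>i\<in>UNIV. ennreal (D2 \<omega> i)) + ennreal c3 * ennreal (P2 \<omega>) \<partial>M)
      = (\<integral>\<^sup>+ \<omega>. ennreal (Rs \<omega>) + ennreal c5 + ennreal c4 * (\<Sum>i\<in>UNIV. ennreal (D2 \<omega> i)) \<partial>M) + (\<integral>\<^sup>+ \<omega>. ennreal c3 * ennreal (P2 \<omega>) \<partial>M)"
      by (rule nn_integral_add) (intro borel_measurable_add borel_measurable_times_ennreal borel_measurable_const borel_measurable_sum mA mD mP mN)+
    have i2: "(\<integral>\<^sup>+ \<omega>. ennreal (Rs \<omega>) + ennreal c5 + ennreal c4 * (\<Sum>i\<in>UNIV. ennreal (D2 \<omega> i)) \<partial>M)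
      = (\<integral>\<^sup>+ \<omega>. ennreal (Rs \<omega>) + ennreal c5 \<partial>M) + (\<integral>\<^sup>+ \<omega>. ennreal c4 * (\<Sum>i\<in>UNIV. ennreal (D2 \<omega> i)) \<partial>M)"
      by (rule nn_integral_add) (intro borel_measurable_add borel_measurable_times_ennreal borel_measurable_const borel_measurable_sum mA mD mP mN)+
    have i3: "(\<integral>\<^sup>+ \<omega>. ennreal (Rs \<omega>) + ennreal c5 \<partial>M) = (\<integral>\<^sup>+ \<omega>. ennreal (Rs \<omega>) \<partial>M) + ennreal c5"
      by (subst nn_integral_add) (auto simp: emeasure_space_1 mA)
    have i4: "(\<integral>\<^sup>+ \<omega>. ennreal c4 * (\<Sum>i\<in>UNIV. ennreal (D2 \<omega> i)) \<partial>M) = ennreal c4 * (\<Sum>i\<in>UNIV. \<integral>\<^sup>+ \<omega>. ennreal (D2 \<omega> i) \<partial>M)"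
      by (subst nn_integral_cmult) (intro borel_measurable_add borel_measurable_times_ennreal borel_measurable_const borel_measurable_sum mA mD mP mN, simp add: nn_integral_sum mD)
    have i5: "(\<integral>\<^sup>+ \<omega>. ennreal c3 * ennreal (P2 \<omega>) \<partial>M) = ennreal c3 * (\<integral>\<^sup>+ \<omega>. ennreal (P2 \<omega>) \<partial>M)"
      by (rule nn_integral_cmult) (rule mP)
    show ?thesis unfolding i1 i2 i3 i4 i5 ..
  qed
  have cardK: "real (card (K i)) \<le> u" for i
  proof -
    have "real (card (K i)) * om = (\<Sum>j\<in>K i. om)" by simp
    also have "\<dots> \<le> (\<Sum>j\<in>K i. W$i$j)" by (intro sum_mono) (auto simp: K_def omW)
    also have "\<dots> \<le> (\<Sum>j\<in>UNIV. W$i$j)" by (intro sum_mono2) (auto simp: Wnn)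
    also have "\<dots> = 1" by (rule Wrs)
    finally have "real (card (K i)) * om \<le> 1" .
    thus ?thesis unfolding u_def using om0 by (simp add: field_simps)
  qed
  have noise: "(\<integral>\<^sup>+ \<omega>. ennreal (n2 \<omega> i j) \<partial>M) \<le> ennreal (\<sigma>\<^sup>2)" for i j
    unfolding n2_def X_def
    by (rule noise_bound[where M=M and D=D and \<xi>=\<xi> and gradF=gradF and gradf=gradf and W=W and J=J and Q=Q,
          OF M_prob samples_rv samples_distr samples_indep J_meas gradF_meas gf_meas A2_var t_pos])
  have step3: "(\<integral>\<^sup>+ \<omega>. ennreal (Rs \<omega>) \<partial>M) \<le> ennreal (2 * \<sigma>\<^sup>2 / om ^ 4 + 2 * \<sigma>\<^sup>2 / real CARD('n))"
  proof -
    define a where "a = 3 * u\<^sup>2 / real CARD('n)"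
    define b where "b = 6 / real CARD('n)"
    have ab: "a \<ge> 0" "b \<ge> 0" unfolding a_def b_def by simp_all
    have Rs_e: "ennreal (Rs \<omega>) = ennreal a * (\<Sum>i\<in>UNIV. \<Sum>j\<in>K i. ennreal (n2 \<omega> i j)) + ennreal b * (\<Sum>i\<in>UNIV. ennreal (n2 \<omega> i i))" for \<omega>
    proof -
      have SS0: "(\<Sum>i\<in>UNIV. \<Sum>j\<in>K i. n2 \<omega> i j) \<ge> 0" "(\<Sum>i\<in>UNIV. n2 \<omega> i i) \<ge> 0"
        by (simp_all add: sum_nonneg n20)
      have e1: "(\<Sum>i\<in>UNIV. \<Sum>j\<in>K i. ennreal (n2 \<omega> i j)) = ennreal (\<Sum>i\<in>UNIV. \<Sum>j\<in>K i. n2 \<omega> i j)"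
        by (simp add: n20 sum_nonneg)
      have e2: "(\<Sum>i\<in>UNIV. ennreal (n2 \<omega> i i)) = ennreal (\<Sum>i\<in>UNIV. n2 \<omega> i i)"
        by (simp add: n20)
      have "ennreal (Rs \<omega>) = ennreal (a * (\<Sum>i\<in>UNIV. \<Sum>j\<in>K i. n2 \<omega> i j)) + ennreal (b * (\<Sum>i\<in>UNIV. n2 \<omega> i i))"
        unfolding Rs_def a_def[symmetric] b_def[symmetric] using ab SS0 by (simp add: ennreal_plus)
      also have "\<dots> = ennreal a * ennreal (\<Sum>i\<in>UNIV. \<Sum>j\<in>K i. n2 \<omega> i j) + ennreal b * ennreal (\<Sum>i\<in>UNIV. n2 \<omega> i i)"
        using ab SS0 by (simp add: ennreal_mult)
      finally show ?thesis unfolding e1 e2 .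
    qed
    have "(\<integral>\<^sup>+ \<omega>. ennreal (Rs \<omega>) \<partial>M)
       = (\<integral>\<^sup>+ \<omega>. ennreal a * (\<Sum>i\<in>UNIV. \<Sum>j\<in>K i. ennreal (n2 \<omega> i j)) + ennreal b * (\<Sum>i\<in>UNIV. ennreal (n2 \<omega> i i)) \<partial>M)"
      by (simp only: Rs_e)
    also have "\<dots> = ennreal a * (\<Sum>i\<in>UNIV. \<Sum>j\<in>K i. \<integral>\<^sup>+ \<omega>. ennreal (n2 \<omega> i j) \<partial>M) + ennreal b * (\<Sum>i\<in>UNIV. \<integral>\<^sup>+ \<omega>. ennreal (n2 \<omega> i i) \<partial>M)"
      by (subst nn_integral_add, intro borel_measurable_add borel_measurable_times_ennreal borel_measurable_const borel_measurable_sum mA mD mP mN, intro borel_measurable_add borel_measurable_times_ennreal borel_measurable_const borel_measurable_sum mA mD mP mN, subst nn_integral_cmult, intro borel_measurable_add borel_measurable_times_ennreal borel_measurable_const borel_measurable_sum mA mD mP mN, subst nn_integral_cmult, intro borel_measurable_add borel_measurable_times_ennreal borel_measurable_const borel_measurable_sum mA mD mP mN)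
         (simp add: nn_integral_sum mN)
    also have "\<dots> \<le> ennreal a * (\<Sum>i\<in>UNIV. \<Sum>j\<in>K i. ennreal (\<sigma>\<^sup>2)) + ennreal b * (\<Sum>i\<in>(UNIV::'n set). ennreal (\<sigma>\<^sup>2))"
    proof -
      have s1: "(\<Sum>i\<in>UNIV. \<Sum>j\<in>K i. \<integral>\<^sup>+ \<omega>. ennreal (n2 \<omega> i j) \<partial>M) \<le> (\<Sum>i\<in>UNIV. \<Sum>j\<in>K i. ennreal (\<sigma>\<^sup>2))"
        by (intro sum_mono noise)
      have s2: "(\<Sum>i\<in>UNIV. \<integral>\<^sup>+ \<omega>. ennreal (n2 \<omega> i i) \<partial>M) \<le> (\<Sum>i\<in>(UNIV::'n set). ennreal (\<sigma>\<^sup>2))"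
        by (intro sum_mono noise)
      show ?thesis using s1 s2 by (intro add_mono mult_left_mono zero_le)
    qed
    also have "\<dots> = ennreal (a * (\<Sum>i\<in>UNIV. real (card (K i)) * \<sigma>\<^sup>2) + b * (real CARD('n) * \<sigma>\<^sup>2))"
    proof -
      have q0: "(\<Sum>j\<in>K i. ennreal (\<sigma>\<^sup>2)) = ennreal (real (card (K i)) * \<sigma>\<^sup>2)" for i
        by (simp add: ennreal_mult'' ennreal_of_nat_eq_real_of_nat)
      have q1: "(\<Sum>i\<in>UNIV. \<Sum>j\<in>K i. ennreal (\<sigma>\<^sup>2)) = ennreal (\<Sum>i\<in>UNIV. real (card (K i)) * \<sigma>\<^sup>2)"
        unfolding q0 by (rule sum_ennreal) simp
      have q2: "(\<Sum>i\<in>(UNIV::'n set). ennreal (\<sigma>\<^sup>2)) = ennreal (real CARD('n) * \<sigma>\<^sup>2)"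
        by (simp add: ennreal_mult'' ennreal_of_nat_eq_real_of_nat)
      have q3: "0 \<le> (\<Sum>i\<in>UNIV. real (card (K i)) * \<sigma>\<^sup>2)" by (simp add: sum_nonneg)
      show ?thesis unfolding q1 q2 using ab q3
        by (simp add: ennreal_mult ennreal_plus)
    qed
    also have "\<dots> \<le> ennreal (2 * \<sigma>\<^sup>2 / om ^ 4 + 2 * \<sigma>\<^sup>2 / real CARD('n))"
    proof (rule ennreal_leI)
      have N0: "real CARD('n) > 0" by simp
      have "(\<Sum>i\<in>UNIV. real (card (K i)) * \<sigma>\<^sup>2) \<le> (\<Sum>i\<in>(UNIV::'n set). u * \<sigma>\<^sup>2)"
        by (intro sum_mono mult_right_mono cardK) simp
      also have "\<dots> = real CARD('n) * u * \<sigma>\<^sup>2" by simp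
      finally have h1: "a * (\<Sum>i\<in>UNIV. real (card (K i)) * \<sigma>\<^sup>2) \<le> a * (real CARD('n) * u * \<sigma>\<^sup>2)"
        using ab by (intro mult_left_mono) auto
      have h2: "a * (real CARD('n) * u * \<sigma>\<^sup>2) = 3 * u ^ 3 * \<sigma>\<^sup>2" unfolding a_def using N0
        by (simp add: field_simps power2_eq_square power3_eq_cube)
      have h3: "b * (real CARD('n) * \<sigma>\<^sup>2) = 6 * \<sigma>\<^sup>2" unfolding b_def using N0 by simp
      have u3: "8 \<le> u ^ 3" using power_mono[OF u2, of 3] by simp
      have e: "u ^ 4 = u ^ 3 * u" by (simp add: eval_nat_numeral)
      have m: "u ^ 3 * 1 \<le> u ^ 3 * (2 * u - 3)" using u2 u3 by (intro mult_left_mono) auto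
      have e2: "u ^ 3 * (2 * u - 3) = 2 * (u ^ 3 * u) - 3 * u ^ 3" by algebra
      have "3 * u ^ 3 + 6 \<le> 2 * u ^ 4" using e m e2 u3 by linarith
      hence h4': "(3 * u ^ 3 + 6) * \<sigma>\<^sup>2 \<le> (2 * u ^ 4) * \<sigma>\<^sup>2" by (rule mult_right_mono) simp
      have e3: "(3 * u ^ 3 + 6) * \<sigma>\<^sup>2 = 3 * u ^ 3 * \<sigma>\<^sup>2 + 6 * \<sigma>\<^sup>2" by algebra
      have e4: "(2 * u ^ 4) * \<sigma>\<^sup>2 = 2 * \<sigma>\<^sup>2 * u ^ 4" by algebra
      have h4: "3 * u ^ 3 * \<sigma>\<^sup>2 + 6 * \<sigma>\<^sup>2 \<le> 2 * \<sigma>\<^sup>2 * u ^ 4" using h4' e3 e4 by linarith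
      have h5: "2 * \<sigma>\<^sup>2 * u ^ 4 = 2 * \<sigma>\<^sup>2 / om ^ 4" unfolding u_def by (simp add: power_one_over)
      have h6: "0 \<le> 2 * \<sigma>\<^sup>2 / real CARD('n)" by simp
      show "a * (\<Sum>i\<in>UNIV. real (card (K i)) * \<sigma>\<^sup>2) + b * (real CARD('n) * \<sigma>\<^sup>2) \<le> 2 * \<sigma>\<^sup>2 / om ^ 4 + 2 * \<sigma>\<^sup>2 / real CARD('n)"
        using h1 h2 h3 h4 h5 h6 by linarith
    qed
    finally show ?thesis .
  qed
  have e5: "ennreal (2 * \<sigma>\<^sup>2 / om ^ 4 + 2 * \<sigma>\<^sup>2 / real CARD('n) + c5) = ennreal (2 * \<sigma>\<^sup>2 / om ^ 4 + 2 * \<sigma>\<^sup>2 / real CARD('n)) + ennreal c5"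
    using c0 om0 by (intro ennreal_plus) auto
  have final: "(\<integral>\<^sup>+ \<omega>. ennreal ((norm ((1 / real CARD('n)) *\<^sub>R (\<Sum>i\<in>UNIV. ross_gbar W gradF J Q \<gamma> (X \<omega>) (Z \<omega>) i - sg gradF (X \<omega>) (Z \<omega>) i i)))\<^sup>2) \<partial>M)
     \<le> ennreal (2 * \<sigma>\<^sup>2 / om ^ 4 + 2 * \<sigma>\<^sup>2 / real CARD('n) + c5) + ennreal c4 * (\<Sum>i\<in>UNIV. \<integral>\<^sup>+ \<omega>. ennreal (D2 \<omega> i) \<partial>M)
       + ennreal c3 * (\<integral>\<^sup>+ \<omega>. ennreal (P2 \<omega>) \<partial>M)"
  proof -
    note step1
    also note step2
    also have "(\<integral>\<^sup>+ \<omega>. ennreal (Rs \<omega>) \<partial>M) + ennreal c5 + ennreal c4 * (\<Sum>i\<in>UNIV. \<integral>\<^sup>+ \<omega>. ennreal (D2 \<omega> i) \<partial>M)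
       + ennreal c3 * (\<integral>\<^sup>+ \<omega>. ennreal (P2 \<omega>) \<partial>M)
       \<le> ennreal (2 * \<sigma>\<^sup>2 / om ^ 4 + 2 * \<sigma>\<^sup>2 / real CARD('n)) + ennreal c5 + ennreal c4 * (\<Sum>i\<in>UNIV. \<integral>\<^sup>+ \<omega>. ennreal (D2 \<omega> i) \<partial>M)
       + ennreal c3 * (\<integral>\<^sup>+ \<omega>. ennreal (P2 \<omega>) \<partial>M)"
      using step3 by (intro add_right_mono)
    finally show ?thesis unfolding e5 .
  qed
  show ?thesis using final unfolding c3_def c4_def c5_def D2_def P2_def X_def Z_def om_def .
qed


end
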